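(* Let $Q\in\mathcal{Q}(n,d,m)$ and $\underline{\delta}\in\Omega_2(Q)$. Then $|\underline{\delta}|\leq m(d-n-1)+2n$.
   Context: A quiver $Q$ is a finite oriented graph; for an arrow $a$, $a''$ is its tail and $a'$ its head. A path $a=a_1\cdots a_s$ ($a_i$ arrows) satisfies $a_i'=a_{i+1}''$; it is closed if $a_1''=a_s'$; $V(a)=\{a_1'',a_1',\dots,a_s'\}$, $A(a)=\{a_1,\dots,a_s\}$. A closed path is primitive if each vertex of $V(a)$ is the head of exactly one $a_i$. $m(Q)$ is the maximal degree of a primitive closed path; $Q$ is strongly connected if some closed path contains all vertices; $\mathcal{Q}(n,d,m)$ is the set of strongly connected quivers with $n$ vertices, $d$ arrows and $m(Q)=m$. The multidegree $\mathrm{mdeg}(a)\in\mathbb{N}^{\#A(Q)}$ has $b$-component equal to the number of $i$ with $a_i=b$; $|\underline{\delta}|=\sum_b\delta_b$. For a nonzero $\underline{\delta}\in\mathbb{N}^{\#A(Q)}$, its support $Q_{\underline{\delta}}$ is the subquiver with arrows $\{a:\delta_a\geq1\}$ and vertices the heads and tails of these arrows; $\underline{\delta}$ is decomposable (with respect to $Q$) if $Q_{\underline{\delta}}$ is not strongly connected but is a disjoint union of strongly connected quivers. $\Omega_0(Q)$ is the set of $\mathrm{mdeg}(h)$ for closed paths $h$ in $Q$ with $A(h)=A(Q)$. A path $a$ is $\underline{\delta}$-double if it is a primitive closed path and $\delta_{a_i}\geq2$ for all $i$. $\Omega_2(Q)$ is the set of $\underline{\delta}\in\Omega_0(Q)$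 such that for every $\underline{\delta}$-double path $a$ in $Q$ the vector $\underline{\delta}-2\,\mathrm{mdeg}(a)$ is decomposable with respect to $Q$. *)

theory Defs
  imports Main
begin

(* A quiver is given by a vertex set V, an arrow set Ar, and tail/head maps tail, head
   (a'' = tail a, a' = head a). Multiple arrows and loops are allowed. *)

definition quiver :: "'v set \<Rightarrow> 'a set \<Rightarrow> ('a \<Rightarrow> 'v) \<Rightarrow> ('a \<Rightarrow> 'v) \<Rightarrow> bool" where
  "quiver V Ar tail head \<longleftrightarrow> finite V \<and> finite Ar \<and> tail ` Ar \<subseteq> V \<and> head ` Ar \<subseteq> V"

definition is_path :: "'a set \<Rightarrow> ('a \<Rightarrow> 'v) \<Rightarrow> ('a \<Rightarrow> 'v) \<Rightarrow> 'a list \<Rightarrow> bool" where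
  "is_path Ar tail head p \<longleftrightarrow> p \<noteq> [] \<and> set p \<subseteq> Ar \<and>
     (\<forall>i. Suc i < length p \<longrightarrow> head (p ! i) = tail (p ! Suc i))"

definition closed_path :: "'a set \<Rightarrow> ('a \<Rightarrow> 'v) \<Rightarrow> ('a \<Rightarrow> 'v) \<Rightarrow> 'a list \<Rightarrow> bool" where
  "closed_path Ar tail head p \<longleftrightarrow> is_path Ar tail head p \<and> tail (p ! 0) = head (last p)"

definition path_verts :: "('a \<Rightarrow> 'v) \<Rightarrow> ('a \<Rightarrow> 'v) \<Rightarrow> 'a list \<Rightarrow> 'v set" where
  "path_verts tail head p = insert (tail (p ! 0)) (head ` set p)"

definition primitive_closed :: "'a set \<Rightarrow> ('a \<Rightarrow> 'v) \<Rightarrow> ('a \<Rightarrow> 'v) \<Rightarrow> 'a list \<Rightarrow> bool" where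
  "primitive_closed Ar tail head p \<longleftrightarrow> closed_path Ar tail head p \<and>
     (\<forall>v \<in> path_verts tail head p. card {i. i < length p \<and> head (p ! i) = v} = 1)"

definition mQ :: "'a set \<Rightarrow> ('a \<Rightarrow> 'v) \<Rightarrow> ('a \<Rightarrow> 'v) \<Rightarrow> nat" where
  "mQ Ar tail head = Max {length p | p. primitive_closed Ar tail head p}"

definition strongly_connected :: "'v set \<Rightarrow> 'a set \<Rightarrow> ('a \<Rightarrow> 'v) \<Rightarrow> ('a \<Rightarrow> 'v) \<Rightarrow> bool" where
  "strongly_connected V Ar tail head \<longleftrightarrow> (\<exists>p. closed_path Ar tail head p \<and> V \<subseteq> path_verts tail head p)"

definition QClass :: "nat \<Rightarrow> nat \<Rightarrow> nat \<Rightarrow> 'v set \<Rightarrow> 'a set \<Rightarrow> ('a \<Rightarrow> 'v) \<Rightarrow> ('a \<Rightarrow> 'v) \<Rightarrow> bool" where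
  "QClass n d m V Ar tail head \<longleftrightarrow> quiver V Ar tail head \<and> strongly_connected V Ar tail head \<and>
     card V = n \<and> card Ar = d \<and> mQ Ar tail head = m"

definition mdeg :: "'a list \<Rightarrow> 'a \<Rightarrow> nat" where
  "mdeg p = (\<lambda>b. count_list p b)"

definition arrow_verts :: "('a \<Rightarrow> 'v) \<Rightarrow> ('a \<Rightarrow> 'v) \<Rightarrow> 'a set \<Rightarrow> 'v set" where
  "arrow_verts tail head S = tail ` S \<union> head ` S"

definition supp_arrows :: "'a set \<Rightarrow> ('a \<Rightarrow> nat) \<Rightarrow> 'a set" where
  "supp_arrows Ar \<delta> = {a \<in> Ar. \<delta> a \<ge> 1}"

definition decomposable :: "'a set \<Rightarrow> ('a \<Rightarrow> 'v) \<Rightarrow> ('a \<Rightarrow> 'v) \<Rightarrow> ('a \<Rightarrow> nat) \<Rightarrow> bool" where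
  "decomposable Ar tail head \<delta> \<longleftrightarrow>
     (let S = supp_arrows Ar \<delta> in
      S \<noteq> {} \<and>
      \<not> strongly_connected (arrow_verts tail head S) S tail head \<and>
      (\<exists>P. \<Union>P = S \<and>
           (\<forall>X\<in>P. X \<noteq> {} \<and> strongly_connected (arrow_verts tail head X) X tail head) \<and>
           (\<forall>X\<in>P. \<forall>Y\<in>P. X \<noteq> Y \<longrightarrow> arrow_verts tail head X \<inter> arrow_verts tail head Y = {})))"

definition Omega0 :: "'a set \<Rightarrow> ('a \<Rightarrow> 'v) \<Rightarrow> ('a \<Rightarrow> 'v) \<Rightarrow> ('a \<Rightarrow> nat) set" where
  "Omega0 Ar tail head = {mdeg h | h. closed_path Ar tail head h \<and> set h = Ar}"

definition delta_double :: "'a set \<Rightarrow> ('a \<Rightarrow> 'v) \<Rightarrow> ('a \<Rightarrow> 'v) \<Rightarrow> ('a \<Rightarrow> nat) \<Rightarrow> 'a list \<Rightarrow> bool" where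
  "delta_double Ar tail head \<delta> p \<longleftrightarrow> primitive_closed Ar tail head p \<and> (\<forall>i < length p. \<delta> (p ! i) \<ge> 2)"

definition Omega2 :: "'a set \<Rightarrow> ('a \<Rightarrow> 'v) \<Rightarrow> ('a \<Rightarrow> 'v) \<Rightarrow> ('a \<Rightarrow> nat) set" where
  "Omega2 Ar tail head = {\<delta> \<in> Omega0 Ar tail head.
     \<forall>p. delta_double Ar tail head \<delta> p \<longrightarrow>
        decomposable Ar tail head (\<lambda>b. \<delta> b - 2 * mdeg p b)}"

end

theory Submission
  imports Defs
begin
locale gr =
  fixes tail head :: "'a \<Rightarrow> 'v"
begin

definition ends :: "'a \<Rightarrow> 'v set" where "ends a = {tail a, head a}"
abbreviation VA :: "'a set \<Rightarrow> 'v set" where "VA A \<equiv> arrow_verts tail head A"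

lemma VA_eq: "VA A = (\<Union>a\<in>A. ends a)"
  unfolding arrow_verts_def ends_def by auto

lemma ends_sub: "a \<in> A \<Longrightarrow> ends a \<subseteq> VA A"
  unfolding VA_eq by auto

lemma VA_mono: "A \<subseteq> B \<Longrightarrow> VA A \<subseteq> VA B"
  unfolding VA_eq by auto

lemma VA_Un: "VA (A \<union> B) = VA A \<union> VA B"
  unfolding VA_eq by auto

lemma VA_insert: "VA (insert a A) = ends a \<union> VA A"
  unfolding VA_eq by auto

lemma VA_empty[simp]: "VA {} = {}"
  unfolding VA_eq by auto

lemma VA_Union: "VA (\<Union>S) = (\<Union>Z\<in>S. VA Z)"
  unfolding VA_eq by auto

lemma ends_ne: "ends a \<noteq> {}" unfolding ends_def by auto

lemma VA_ne: "A \<noteq> {} \<Longrightarrow> VA A \<noteq> {}"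
  unfolding VA_eq using ends_ne by auto

lemma finite_ends: "finite (ends a)" unfolding ends_def by auto

lemma finite_VA: "finite A \<Longrightarrow> finite (VA A)"
  unfolding VA_eq using finite_ends by auto

definition lk :: "'a set \<Rightarrow> ('a \<times> 'a) set" where
  "lk A = {(a,b). a \<in> A \<and> b \<in> A \<and> ends a \<inter> ends b \<noteq> {}}"

definition conn :: "'a set \<Rightarrow> bool" where
  "conn A \<longleftrightarrow> A \<noteq> {} \<and> (\<forall>a\<in>A. \<forall>b\<in>A. (a,b) \<in> (lk A)\<^sup>*)"

definition closedin :: "'a set \<Rightarrow> 'a set \<Rightarrow> bool" where
  "closedin A Z \<longleftrightarrow> (\<forall>b\<in>A - Z. ends b \<inter> VA Z = {})"

definition comps :: "'a set \<Rightarrow> 'a set set" where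
  "comps A = {Z. Z \<subseteq> A \<and> conn Z \<and> closedin A Z}"

lemma lk_mono: "A \<subseteq> B \<Longrightarrow> lk A \<subseteq> lk B"
  unfolding lk_def by auto

lemma rtr_mono: "A \<subseteq> B \<Longrightarrow> (a,b) \<in> (lk A)\<^sup>* \<Longrightarrow> (a,b) \<in> (lk B)\<^sup>*"
  using rtrancl_mono[OF lk_mono] by blast

lemma lk_sym: "(a,b) \<in> lk A \<Longrightarrow> (b,a) \<in> lk A"
  unfolding lk_def by auto

lemma rtr_sym: "(a,b) \<in> (lk A)\<^sup>* \<Longrightarrow> (b,a) \<in> (lk A)\<^sup>*"
proof (induction rule: rtrancl_induct)
  case base then show ?case by simp
next
  case (step y z)
  then show ?case using lk_sym by (meson converse_rtrancl_into_rtrancl)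
qed

lemma rtr_in: "(a,b) \<in> (lk A)\<^sup>* \<Longrightarrow> a \<in> A \<Longrightarrow> b \<in> A"
  by (induction rule: rtrancl_induct) (auto simp: lk_def)

lemma lk_I: "a \<in> A \<Longrightarrow> b \<in> A \<Longrightarrow> v \<in> ends a \<Longrightarrow> v \<in> ends b \<Longrightarrow> (a,b) \<in> lk A"
  unfolding lk_def by auto

lemma conn_single: "conn {a}"
  unfolding conn_def by auto

lemma conn_closed_sub:
  assumes "conn Z" "Z \<subseteq> A" "closedin A Y" "Z \<inter> Y \<noteq> {}"
  shows "Z \<subseteq> Y"
proof
  fix b assume b: "b \<in> Z"
  obtain a where a: "a \<in> Z" "a \<in> Y" using assms(4) by auto
  have "(a,b) \<in> (lk Z)\<^sup>*" using assms(1) a b unfolding conn_def by auto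
  then show "b \<in> Y"
  proof (induction rule: rtrancl_induct)
    case base then show ?case using a by simp
  next
    case (step y z)
    then have "y \<in> Z" "z \<in> Z" "ends y \<inter> ends z \<noteq> {}" unfolding lk_def by auto
    moreover have "ends y \<subseteq> VA Y" using step.IH ends_sub by auto
    ultimately show ?case using assms(2,3) unfolding closedin_def by blast
  qed
qed

lemma comps_eq: "Z \<in> comps A \<Longrightarrow> Y \<in> comps A \<Longrightarrow> Z \<inter> Y \<noteq> {} \<Longrightarrow> Z = Y"
  unfolding comps_def using conn_closed_sub by (metis Int_commute subset_antisym mem_Collect_eq)

lemma comps_disj_V: "Z \<in> comps A \<Longrightarrow> Y \<in> comps A \<Longrightarrow> Z \<noteq> Y \<Longrightarrow> VA Z \<inter> VA Y = {}"
proof (rule ccontr)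
  assume a: "Z \<in> comps A" "Y \<in> comps A" "Z \<noteq> Y" "VA Z \<inter> VA Y \<noteq> {}"
  then obtain v where v: "v \<in> VA Z" "v \<in> VA Y" by auto
  then obtain b where b: "b \<in> Y" "v \<in> ends b" unfolding VA_eq by auto
  have "Z \<inter> Y = {}" using comps_eq a by blast
  then have "b \<in> A - Z" using a b unfolding comps_def by auto
  then have "ends b \<inter> VA Z = {}" using a unfolding comps_def closedin_def by auto
  then show False using v b by auto
qed

lemma comps_disj: "Z \<in> comps A \<Longrightarrow> Y \<in> comps A \<Longrightarrow> Z \<noteq> Y \<Longrightarrow> Z \<inter> Y = {}"
  using comps_eq by blast

lemma comps_sub: "Z \<in> comps A \<Longrightarrow> Z \<subseteq> A" unfolding comps_def by auto
lemma comps_conn: "Z \<in> comps A \<Longrightarrow> conn Z" unfolding comps_def by auto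
lemma comps_ne: "Z \<in> comps A \<Longrightarrow> Z \<noteq> {}" unfolding comps_def conn_def by auto

lemma comps_cover: assumes "a \<in> A" shows "\<exists>Z\<in>comps A. a \<in> Z"
proof -
  define Z where "Z = {b. (a,b) \<in> (lk A)\<^sup>*}"
  have aZ: "a \<in> Z" unfolding Z_def by auto
  have ZA: "Z \<subseteq> A" unfolding Z_def using rtr_in assms by auto
  have reach: "(a,b) \<in> (lk Z)\<^sup>*" if "b \<in> Z" for b
  proof -
    have "(a,b) \<in> (lk A)\<^sup>*" using that unfolding Z_def by auto
    then show ?thesis
    proof (induction rule: rtrancl_induct)
      case base then show ?case by simp
    next
      case (step y z)
      have "y \<in> Z" "z \<in> Z" using step unfolding Z_def by auto
      then have "(y,z) \<in> lk Z" using step(2) unfolding lk_def by auto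
      then show ?case using step by (meson rtrancl.rtrancl_into_rtrancl)
    qed
  qed
  have "(b,c) \<in> (lk Z)\<^sup>*" if "b \<in> Z" "c \<in> Z" for b c
    using reach[OF that(1)] reach[OF that(2)] rtr_sym rtrancl_trans by metis
  then have "conn Z"
    unfolding conn_def using aZ by auto
  moreover have "closedin A Z"
    unfolding closedin_def
  proof (intro ballI)
    fix b assume b: "b \<in> A - Z"
    show "ends b \<inter> VA Z = {}"
    proof (rule ccontr)
      assume "ends b \<inter> VA Z \<noteq> {}"
      then obtain c v where c: "c \<in> Z" "v \<in> ends c" "v \<in> ends b" unfolding VA_eq by auto
      then have "(c,b) \<in> lk A" using ZA b lk_I by auto
      then have "(a,b) \<in> (lk A)\<^sup>*" using c(1) unfolding Z_def by auto
      then show False using b unfolding Z_def by auto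
    qed
  qed
  ultimately show ?thesis using ZA aZ unfolding comps_def by auto
qed

lemma Union_comps: "\<Union>(comps A) = A"
  using comps_cover comps_sub by blast

lemma finite_comps: "finite A \<Longrightarrow> finite (comps A)"
  by (rule finite_subset[of _ "Pow A"]) (auto simp: comps_def)

lemma comps_empty[simp]: "comps {} = {}"
  unfolding comps_def conn_def by auto

lemma conn_comps: "conn A \<Longrightarrow> comps A = {A}"
proof -
  assume c: "conn A"
  have "A \<in> comps A" using c unfolding comps_def closedin_def by auto
  moreover have "Z = A" if "Z \<in> comps A" for Z
  proof -
    have "Z \<noteq> {}" "Z \<subseteq> A" using that comps_ne comps_sub by auto
    then have "A \<subseteq> Z" using conn_closed_sub[OF c, of A Z] that unfolding comps_def by auto
    then show ?thesis using \<open>Z \<subseteq> A\<close> by auto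
  qed
  ultimately show ?thesis by auto
qed

lemma comps_conn_iff: "conn A \<longleftrightarrow> comps A = {A}"
proof
  assume "conn A" then show "comps A = {A}" by (rule conn_comps)
next
  assume "comps A = {A}" then have "A \<in> comps A" by auto
  then show "conn A" using comps_conn by blast
qed

lemma in_comps_closed:
  assumes "Z \<subseteq> A" "conn Z" "closedin A Z" shows "Z \<in> comps A"
  using assms unfolding comps_def by auto

lemma conn_union_family:
  assumes "conn X" "\<And>Z. Z \<in> T \<Longrightarrow> conn Z \<and> VA Z \<inter> VA X \<noteq> {}"
  shows "conn (X \<union> \<Union>T)"
proof -
  let ?B = "X \<union> \<Union>T"
  obtain x0 where x0: "x0 \<in> X" using assms(1) unfolding conn_def by auto
  have r: "(x0,b) \<in> (lk ?B)\<^sup>*" if "b \<in> ?B" for b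
  proof (cases "b \<in> X")
    case True then show ?thesis using assms(1) x0 rtr_mono[of X ?B] unfolding conn_def by auto
  next
    case False
    from \<open>b \<in> ?B\<close> False have "b \<in> \<Union>T" by simp
    then obtain Z where Z: "Z \<in> T" "b \<in> Z" by auto
    obtain v where v: "v \<in> VA Z" "v \<in> VA X" using assms(2)[OF Z(1)] by auto
    obtain z x where zx: "z \<in> Z" "v \<in> ends z" "x \<in> X" "v \<in> ends x" using v unfolding VA_eq by auto
    have 1: "(x0,x) \<in> (lk ?B)\<^sup>*" using assms(1) x0 zx rtr_mono[of X ?B] unfolding conn_def by auto
    have 2: "(x,z) \<in> lk ?B" using zx Z lk_I[of x ?B z v] by auto
    have 3: "(z,b) \<in> (lk ?B)\<^sup>*" using assms(2)[OF Z(1)] zx Z rtr_mono[of Z ?B] unfolding conn_def by auto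
    show ?thesis using 1 2 3 by (meson rtrancl_into_rtrancl rtrancl_trans)
  qed
  have "(a,b) \<in> (lk ?B)\<^sup>*" if "a \<in> ?B" "b \<in> ?B" for a b
    using r[OF that(1)] r[OF that(2)] rtr_sym rtrancl_trans by metis
  then show ?thesis unfolding conn_def using x0 by auto
qed

lemma comps_union_conn:
  fixes A X :: "'a set"
  assumes X: "conn X"
  defines "U \<equiv> {Z\<in>comps A. VA Z \<inter> VA X = {}}"
  defines "B \<equiv> X \<union> \<Union>{Z\<in>comps A. VA Z \<inter> VA X \<noteq> {}}"
  shows "comps (A \<union> X) = insert B U" and "B \<notin> U" and "X \<subseteq> B"
proof -
  let ?T = "{Z\<in>comps A. VA Z \<inter> VA X \<noteq> {}}"
  have Bc: "conn B" unfolding B_def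
    by (rule conn_union_family[OF X]) (auto simp: comps_conn)
  have BA: "B \<subseteq> A \<union> X" unfolding B_def using comps_sub by auto
  have Bcl: "closedin (A \<union> X) B"
    unfolding closedin_def
  proof (intro ballI)
    fix b assume b: "b \<in> A \<union> X - B"
    then have bA: "b \<in> A" "b \<notin> X" unfolding B_def by auto
    obtain Z where Z: "Z \<in> comps A" "b \<in> Z" using comps_cover[OF bA(1)] by auto
    have ZT: "Z \<notin> ?T" using Z b unfolding B_def by auto
    then have ZX: "VA Z \<inter> VA X = {}" using Z by auto
    have "VA Z \<inter> VA Z' = {}" if "Z' \<in> ?T" for Z'
      using comps_disj_V[of Z A Z'] that Z ZT by auto
    then have "VA Z \<inter> VA B = {}" unfolding B_def VA_Un VA_Union using ZX by auto
    then show "ends b \<inter> VA B = {}" using ends_sub[OF Z(2)] by auto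
  qed
  have Bin: "B \<in> comps (A \<union> X)" using in_comps_closed[OF BA Bc Bcl] .
  have Uin: "Z \<in> comps (A \<union> X)" if "Z \<in> U" for Z
  proof -
    have Z: "Z \<in> comps A" "VA Z \<inter> VA X = {}" using that unfolding U_def by auto
    have "closedin (A \<union> X) Z" unfolding closedin_def
    proof (intro ballI)
      fix b assume b: "b \<in> A \<union> X - Z"
      show "ends b \<inter> VA Z = {}"
      proof (cases "b \<in> X")
        case True then show ?thesis using ends_sub[OF True] Z(2) by auto
      next
        case False then show ?thesis using b Z(1) unfolding comps_def closedin_def by auto
      qed
    qed
    then show ?thesis using Z(1) comps_sub comps_conn in_comps_closed[of Z "A \<union> X"] by blast
  qed
  have cover: "A \<union> X \<subseteq> B \<union> \<Union>U"
  proof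
    fix b assume "b \<in> A \<union> X"
    show "b \<in> B \<union> \<Union>U"
    proof (cases "b \<in> X")
      case True then show ?thesis unfolding B_def by auto
    next
      case False
      then have "b \<in> A" using \<open>b \<in> A \<union> X\<close> by auto
      then obtain Z where "Z \<in> comps A" "b \<in> Z" using comps_cover by blast
      then show ?thesis unfolding B_def U_def by auto
    qed
  qed
  show "comps (A \<union> X) = insert B U"
  proof
    show "insert B U \<subseteq> comps (A \<union> X)" using Bin Uin by auto
  next
    show "comps (A \<union> X) \<subseteq> insert B U"
    proof
      fix Y assume Y: "Y \<in> comps (A \<union> X)"
      obtain b where b: "b \<in> Y" using comps_ne[OF Y] by auto
      then have "b \<in> B \<union> \<Union>U" using cover comps_sub[OF Y] by auto
      then show "Y \<in> insert B U"
      proof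
        assume "b \<in> B" then have "Y = B" using comps_eq[OF Y Bin] b by auto
        then show ?thesis by auto
      next
        assume "b \<in> \<Union>U"
        then obtain Z where "Z \<in> U" "b \<in> Z" by auto
        then have "Y = Z" using comps_eq[OF Y Uin[of Z]] b by auto
        then show ?thesis using \<open>Z \<in> U\<close> by auto
      qed
    qed
  qed
  show "X \<subseteq> B" unfolding B_def by auto
  show "B \<notin> U"
  proof
    assume "B \<in> U"
    then have "VA B \<inter> VA X = {}" unfolding U_def by auto
    moreover have "VA X \<subseteq> VA B" using VA_mono \<open>X \<subseteq> B\<close> unfolding B_def by auto
    moreover have "VA X \<noteq> {}" using X VA_ne unfolding conn_def by auto
    ultimately show False by auto
  qed
qed

end

context gr begin

definition cyc :: "'a set \<Rightarrow> int" where
  "cyc A = int (card A) - int (card (VA A)) + int (card (comps A))"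

lemma conn_sub_comp: "conn Z \<Longrightarrow> Z \<subseteq> A \<Longrightarrow> \<exists>Y\<in>comps A. Z \<subseteq> Y"
proof -
  assume a: "conn Z" "Z \<subseteq> A"
  then obtain z where z: "z \<in> Z" unfolding conn_def by auto
  then obtain Y where Y: "Y \<in> comps A" "z \<in> Y" using comps_cover a by blast
  have "Z \<subseteq> Y" using conn_closed_sub[OF a(1) a(2), of Y] Y z unfolding comps_def by auto
  then show ?thesis using Y by auto
qed

lemma conn_closed_eq: "conn S \<Longrightarrow> X \<subseteq> S \<Longrightarrow> X \<noteq> {} \<Longrightarrow> closedin S X \<Longrightarrow> X = S"
  using conn_closed_sub[of S S X] by auto

lemma card_ends: "card (ends a) \<le> 2" "tail a = head a \<Longrightarrow> card (ends a) = 1"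
  unfolding ends_def by (auto simp: card_insert_if)

lemma cyc_insert:
  assumes fin: "finite A" and aA: "a \<notin> A"
  shows "cyc A \<le> cyc (insert a A)"
    and "tail a = head a \<or> (\<exists>Z\<in>comps A. ends a \<subseteq> VA Z) \<Longrightarrow> cyc A + 1 \<le> cyc (insert a A)"
proof -
  have VAa: "VA {a} = ends a" using VA_insert by simp
  define U where "U = {Z\<in>comps A. VA Z \<inter> VA {a} = {}}"
  define T where "T = comps A - U"
  have cu: "comps (A \<union> {a}) = insert (({a}) \<union> \<Union>{Z\<in>comps A. VA Z \<inter> VA {a} \<noteq> {}}) U"
    and nU: "({a}) \<union> \<Union>{Z\<in>comps A. VA Z \<inter> VA {a} \<noteq> {}} \<notin> U"
    using comps_union_conn[OF conn_single[of a], where A=A] unfolding U_def by auto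
  have finc: "finite (comps A)" using finite_comps[OF fin] .
  have finU: "finite U" using finc unfolding U_def by auto
  have ia: "insert a A = A \<union> {a}" by auto
  have c1: "card (comps (insert a A)) = card U + 1"
    unfolding ia cu using nU finU by simp
  have Usub: "U \<subseteq> comps A" unfolding U_def by auto
  have TU: "card (comps A) = card U + card T"
  proof -
    have "comps A = U \<union> T" "U \<inter> T = {}" using Usub unfolding T_def by auto
    then show ?thesis using finc finU card_Un_disjoint[of U T] unfolding T_def by auto
  qed
  have Tsub: "\<And>Z. Z \<in> T \<Longrightarrow> VA Z \<inter> ends a \<noteq> {}" unfolding T_def U_def VAa by auto
  define f where "f Z = (SOME v. v \<in> VA Z \<inter> ends a)" for Z
  have fin_: "f Z \<in> VA Z \<inter> ends a" if "Z \<in> T" for Z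
    unfolding f_def using Tsub[OF that] by (meson ex_in_conv someI_ex)
  have inj: "inj_on f T"
  proof (rule inj_onI)
    fix Z Y assume ZY: "Z \<in> T" "Y \<in> T" "f Z = f Y"
    show "Z = Y"
    proof (rule ccontr)
      assume "Z \<noteq> Y"
      then have "VA Z \<inter> VA Y = {}" using comps_disj_V ZY unfolding T_def by auto
      then show False using fin_[OF ZY(1)] fin_[OF ZY(2)] ZY(3) by auto
    qed
  qed
  have fT: "f ` T \<subseteq> ends a \<inter> VA A"
    using fin_ VA_mono[OF comps_sub] unfolding T_def by blast
  have cT: "card T \<le> card (ends a \<inter> VA A)"
    using card_inj_on_le[OF inj fT] finite_ends by auto
  have cV: "card (VA (insert a A)) = card (VA A) + card (ends a - VA A)"
  proof -
    have "VA (insert a A) = VA A \<union> (ends a - VA A)" using VA_insert by auto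
    then show ?thesis using finite_VA[OF fin] finite_ends card_Un_disjoint[of "VA A" "ends a - VA A"]
      by auto
  qed
  have ce: "card (ends a) = card (ends a - VA A) + card (ends a \<inter> VA A)"
  proof -
    have "ends a = (ends a - VA A) \<union> (ends a \<inter> VA A)" by auto
    then have "card (ends a) = card ((ends a - VA A) \<union> (ends a \<inter> VA A))" by simp
    also have "\<dots> = card (ends a - VA A) + card (ends a \<inter> VA A)"
      by (rule card_Un_disjoint) (auto simp: finite_ends)
    finally show ?thesis .
  qed
  have cA: "card (insert a A) = card A + 1" using fin aA by simp
  have diff: "cyc (insert a A) - cyc A = 2 - int (card (ends a - VA A)) - int (card T)"
    unfolding cyc_def using c1 TU cV cA by simp
  show "cyc A \<le> cyc (insert a A)"
    using diff cT ce card_ends(1)[of a] by linarith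
  assume h: "tail a = head a \<or> (\<exists>Z\<in>comps A. ends a \<subseteq> VA Z)"
  then show "cyc A + 1 \<le> cyc (insert a A)"
  proof
    assume "tail a = head a"
    then show ?thesis using diff cT ce card_ends(2)[of a] by linarith
  next
    assume "\<exists>Z\<in>comps A. ends a \<subseteq> VA Z"
    then obtain Z0 where Z0: "Z0 \<in> comps A" "ends a \<subseteq> VA Z0" by auto
    have e: "ends a - VA A = {}" using Z0 VA_mono[OF comps_sub[OF Z0(1)]] by auto
    have "T \<subseteq> {Z0}"
    proof
      fix Z assume Z: "Z \<in> T"
      show "Z \<in> {Z0}"
      proof (rule ccontr)
        assume "Z \<notin> {Z0}"
        then have "VA Z \<inter> VA Z0 = {}" using comps_disj_V Z Z0 unfolding T_def by auto
        then show False using Tsub[OF Z] Z0(2) by auto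
      qed
    qed
    then have "card T \<le> card {Z0}" by (rule card_mono[rotated]) simp
    then have "card T \<le> 1" by simp
    then show ?thesis using diff e by simp
  qed
qed

lemma cyc_mono_aux: "finite S \<Longrightarrow> finite B \<Longrightarrow> cyc B \<le> cyc (B \<union> S)"
proof (induction S rule: finite_induct)
  case empty then show ?case by simp
next
  case (insert x S)
  show ?case
  proof (cases "x \<in> B \<union> S")
    case True
    then have "B \<union> insert x S = B \<union> S" by auto
    then show ?thesis using insert by simp
  next
    case False
    have "cyc (B \<union> S) \<le> cyc (insert x (B \<union> S))"
      using cyc_insert(1)[of "B \<union> S" x] False insert by auto
    then show ?thesis using insert by simp
  qed
qed

lemma cyc_mono: "finite A \<Longrightarrow> B \<subseteq> A \<Longrightarrow> cyc B \<le> cyc A"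
  using cyc_mono_aux[of A B] by (simp add: Un_absorb1 finite_subset)

lemma cyc_conn: "conn K \<Longrightarrow> cyc K = int (card K) - int (card (VA K)) + 1"
  unfolding cyc_def using conn_comps by simp

lemma cyc_comps:
  assumes fin: "finite A"
  shows "cyc A = (\<Sum>Z\<in>comps A. cyc Z)"
proof -
  have finc: "finite (comps A)" using finite_comps[OF fin] .
  have finZ: "\<And>Z. Z \<in> comps A \<Longrightarrow> finite Z" using fin comps_sub finite_subset by blast
  have c1: "card A = (\<Sum>Z\<in>comps A. card Z)"
  proof -
    have "card (\<Union>(comps A)) = (\<Sum>Z\<in>comps A. card Z)"
      by (rule card_Union_disjoint) (auto simp: pairwise_def disjnt_def finZ dest: comps_disj)
    then show ?thesis using Union_comps by simp
  qed
  have c2: "card (VA A) = (\<Sum>Z\<in>comps A. card (VA Z))"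
  proof -
    have "VA A = (\<Union>Z\<in>comps A. VA Z)" using VA_Union[of "comps A"] Union_comps by simp
    moreover have "card (\<Union>Z\<in>comps A. VA Z) = (\<Sum>Z\<in>comps A. card (VA Z))"
      by (rule card_UN_disjoint) (auto simp: finc finZ finite_VA dest: comps_disj_V)
    ultimately show ?thesis by simp
  qed
  have "(\<Sum>Z\<in>comps A. cyc Z) = (\<Sum>Z\<in>comps A. int (card Z) - int (card (VA Z)) + 1)"
    by (rule sum.cong) (auto simp: cyc_conn comps_conn)
  also have "\<dots> = int (card A) - int (card (VA A)) + int (card (comps A))"
    by (simp add: sum.distrib sum_subtractf c1 c2)
  finally show ?thesis unfolding cyc_def by simp
qed

lemma touch:
  assumes "conn (A \<union> B)" "A \<noteq> {}" "Z \<in> comps B"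
  shows "VA Z \<inter> VA A \<noteq> {}"
proof
  assume d: "VA Z \<inter> VA A = {}"
  have "closedin (A \<union> B) Z"
    unfolding closedin_def
  proof (intro ballI)
    fix b assume b: "b \<in> A \<union> B - Z"
    show "ends b \<inter> VA Z = {}"
    proof (cases "b \<in> B")
      case True then show ?thesis using b assms(3) unfolding comps_def closedin_def by auto
    next
      case False then have "b \<in> A" using b by auto
      then show ?thesis using ends_sub[of b A] d by auto
    qed
  qed
  then have "Z = A \<union> B"
    using conn_closed_eq[OF assms(1), of Z] comps_sub[OF assms(3)] comps_ne[OF assms(3)] by auto
  then have "VA A \<subseteq> VA Z" using VA_mono by auto
  then show False using d VA_ne[OF assms(2)] by auto
qed

lemma conn_union_touch:
  assumes "conn X" "\<And>Z. Z \<in> comps A \<Longrightarrow> VA Z \<inter> VA X \<noteq> {}"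
  shows "conn (A \<union> X)"
proof -
  let ?U = "{Z\<in>comps A. VA Z \<inter> VA X = {}}"
  let ?B = "X \<union> \<Union>{Z\<in>comps A. VA Z \<inter> VA X \<noteq> {}}"
  have U: "?U = {}" using assms(2) by auto
  have c: "comps (A \<union> X) = {?B}" using comps_union_conn(1)[OF assms(1), of A] U by simp
  have "?B = A \<union> X"
  proof
    show "?B \<subseteq> A \<union> X" using comps_sub by auto
    show "A \<union> X \<subseteq> ?B" using Union_comps[of "A \<union> X"] c by auto
  qed
  then show ?thesis using c comps_conn_iff by auto
qed

end

lemma count_list_rotate1: "count_list (rotate1 xs) y = count_list xs y"
  by (cases xs) auto

lemma count_list_map_filter: "count_list (map f xs) y = length (filter (\<lambda>x. f x = y) xs)"
  by (induction xs) auto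

lemma sum_count_list: "finite S \<Longrightarrow> (\<Sum>a\<in>S. count_list q a) = length (filter (\<lambda>a. a \<in> S) q)"
proof (induction q)
  case Nil then show ?case by simp
next
  case (Cons x q)
  have "(\<Sum>a\<in>S. count_list (x # q) a) = (\<Sum>a\<in>S. (if x = a then 1 else 0) + count_list q a)"
    by (rule sum.cong) auto
  also have "\<dots> = (\<Sum>a\<in>S. (if x = a then 1 else 0)) + (\<Sum>a\<in>S. count_list q a)"
    by (simp add: sum.distrib)
  also have "(\<Sum>a\<in>S. (if x = a then 1 else 0)::nat) = (if x \<in> S then 1 else 0)"
    using Cons.prems by (simp add: sum.delta)
  finally show ?case using Cons by simp
qed

lemma count_list_distinct: "distinct xs \<Longrightarrow> count_list xs a = (if a \<in> set xs then 1 else 0)"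
  by (induction xs) auto

context gr begin

lemma closed_path_iff:
  "closed_path Ar tail head p \<longleftrightarrow> p \<noteq> [] \<and> set p \<subseteq> Ar \<and> map head p = rotate1 (map tail p)"
proof
  assume c: "closed_path Ar tail head p"
  then have p: "p \<noteq> []" "set p \<subseteq> Ar" "\<And>i. Suc i < length p \<Longrightarrow> head (p!i) = tail (p!Suc i)"
    "tail (p!0) = head (last p)" unfolding closed_path_def is_path_def by auto
  have "map head p ! i = rotate1 (map tail p) ! i" if "i < length p" for i
  proof (cases "Suc i < length p")
    case True then show ?thesis using p that by (simp add: nth_rotate1)
  next
    case False
    then have "i = length p - 1" using that by auto
    then show ?thesis using p that by (simp add: nth_rotate1 last_conv_nth)
  qed
  then show "p \<noteq> [] \<and> set p \<subseteq> Ar \<and> map head p = rotate1 (map tail p)"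
    using p by (intro conjI nth_equalityI) auto
next
  assume h: "p \<noteq> [] \<and> set p \<subseteq> Ar \<and> map head p = rotate1 (map tail p)"
  have e: "head (p!i) = tail (p ! (Suc i mod length p))" if "i < length p" for i
  proof -
    have 1: "head (p!i) = rotate1 (map tail p) ! i" using h that by (metis nth_map)
    have 2: "rotate1 (map tail p) ! i = map tail p ! (Suc i mod length p)"
      using that by (simp add: nth_rotate1)
    have "Suc i mod length p < length p" using that by (intro mod_less_divisor) auto
    then have 3: "map tail p ! (Suc i mod length p) = tail (p ! (Suc i mod length p))" by simp
    show ?thesis using 1 2 3 by simp
  qed
  have 1: "head (p!i) = tail (p!Suc i)" if "Suc i < length p" for i using e[of i] that by simp
  have "head (last p) = tail (p!0)"
    using e[of "length p - 1"] h by (simp add: last_conv_nth)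
  then show "closed_path Ar tail head p" unfolding closed_path_def is_path_def using h 1 by auto
qed

lemma closed_rotate:
  assumes "closed_path Ar tail head p" shows "closed_path Ar tail head (rotate n p)"
proof -
  have h: "p \<noteq> []" "set p \<subseteq> Ar" "map head p = rotate1 (map tail p)"
    using assms closed_path_iff by auto
  have "map head (rotate n p) = rotate n (map head p)" by (simp add: rotate_map)
  also have "\<dots> = rotate1 (rotate n (map tail p))" using h(3) by (simp add: rotate1_rotate_swap)
  also have "\<dots> = rotate1 (map tail (rotate n p))" by (simp add: rotate_map)
  finally show ?thesis using h closed_path_iff by auto
qed

lemma prim_closed: "primitive_closed Ar tail head p \<Longrightarrow> closed_path Ar tail head p"
  unfolding primitive_closed_def by auto

lemma prim_distinct_heads:
  assumes pc: "primitive_closed Ar tail head p"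
  shows "distinct (map head p)"
proof -
  have c: "\<And>v. v \<in> path_verts tail head p \<Longrightarrow> card {i. i < length p \<and> head (p ! i) = v} = 1"
    using pc unfolding primitive_closed_def by auto
  show ?thesis
  proof (subst distinct_conv_nth, intro allI impI)
    fix i j assume ij: "i < length (map head p)" "j < length (map head p)" "i \<noteq> j"
    show "map head p ! i \<noteq> map head p ! j"
    proof
      assume eq: "map head p ! i = map head p ! j"
      let ?v = "head (p!i)"
      have "?v \<in> path_verts tail head p" unfolding path_verts_def using ij by auto
      then have "card {t. t < length p \<and> head (p ! t) = ?v} = 1" using c by blast
      moreover have "{i, j} \<subseteq> {t. t < length p \<and> head (p ! t) = ?v}" using ij eq by auto
      moreover have "card {i,j} = 2" using ij by auto
      moreover have "finite {t. t < length p \<and> head (p ! t) = ?v}" by auto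
      ultimately have "2 \<le> (1::nat)" by (metis card_mono)
      then show False by simp
    qed
  qed
qed

lemma prim_facts:
  assumes pc: "primitive_closed Ar tail head p"
  shows "p \<noteq> []" "set p \<subseteq> Ar" "distinct p" "distinct (map tail p)"
    "card (set p) = length p" "VA (set p) = head ` set p" "card (VA (set p)) = length p"
    "map head p = rotate1 (map tail p)"
    "\<And>a. count_list p a = (if a \<in> set p then 1 else 0)"
proof -
  have cp: "closed_path Ar tail head p" using prim_closed[OF pc] .
  then have h: "p \<noteq> []" "set p \<subseteq> Ar" "map head p = rotate1 (map tail p)" using closed_path_iff by auto
  have dh: "distinct (map head p)" using prim_distinct_heads[OF pc] .
  show "p \<noteq> []" "set p \<subseteq> Ar" "map head p = rotate1 (map tail p)" using h by auto
  show dp: "distinct p" using dh distinct_map by auto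
  show "distinct (map tail p)" using dh h(3) by simp
  show "card (set p) = length p" using dp distinct_card by auto
  have "set (map head p) = set (map tail p)" using h(3) by simp
  then have "head ` set p = tail ` set p" by simp
  then show vh: "VA (set p) = head ` set p" unfolding arrow_verts_def by auto
  show "card (VA (set p)) = length p" unfolding vh using dh distinct_card[OF dh] by simp
  show "\<And>a. count_list p a = (if a \<in> set p then 1 else 0)" using count_list_distinct[OF dp] by auto
qed

lemma path_conn:
  assumes "q \<noteq> []" "\<And>i. Suc i < length q \<Longrightarrow> head (q!i) = tail (q!Suc i)"
  shows "conn (set q)"
proof -
  have r: "(q!0, q!i) \<in> (lk (set q))\<^sup>*" if "i < length q" for i
    using that
  proof (induction i)
    case 0 then show ?case by simp
  next
    case (Suc i)
    have "(q!i, q!Suc i) \<in> lk (set q)"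
      using assms(2)[OF Suc.prems] Suc.prems lk_I[of "q!i" "set q" "q!Suc i" "head (q!i)"]
      unfolding ends_def by auto
    moreover have "(q!0, q!i) \<in> (lk (set q))\<^sup>*" using Suc by simp
    ultimately show ?case by (rule rtrancl.rtrancl_into_rtrancl[rotated])
  qed
  have "(a,b) \<in> (lk (set q))\<^sup>*" if ab: "a \<in> set q" "b \<in> set q" for a b
  proof -
    obtain i where i: "i < length q" "q!i = a" using ab(1) by (auto simp: in_set_conv_nth)
    obtain j where j: "j < length q" "q!j = b" using ab(2) by (auto simp: in_set_conv_nth)
    have 1: "(a, q!0) \<in> (lk (set q))\<^sup>*" "(q!0, b) \<in> (lk (set q))\<^sup>*" using r[OF i(1)] r[OF j(1)] rtr_sym i j by auto
    show ?thesis by (rule rtrancl_trans[OF 1])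
  qed
  then show ?thesis unfolding conn_def using assms(1) by auto
qed

lemma prim_conn: assumes "primitive_closed Ar tail head p" shows "conn (set p)"
proof (rule path_conn)
  show "p \<noteq> []" using prim_facts(1)[OF assms] .
  show "\<And>i. Suc i < length p \<Longrightarrow> head (p!i) = tail (p!Suc i)"
    using assms unfolding primitive_closed_def closed_path_def is_path_def by blast
qed

lemma prim_loop: "primitive_closed Ar tail head p \<Longrightarrow> length p = 1 \<Longrightarrow> a \<in> set p \<Longrightarrow> tail a = head a"
  unfolding primitive_closed_def closed_path_def by (cases p) auto

lemma prim_minus:
  assumes pc: "primitive_closed Ar tail head p" and a0: "a0 \<in> set p" and len: "length p \<ge> 2"
  shows "conn (set p - {a0})" "ends a0 \<subseteq> VA (set p - {a0})"
proof -
  obtain k where k: "k < length p" "p!k = a0" using a0 by (metis in_set_conv_nth)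
  define q where "q = rotate (Suc k) p"
  have lq: "length q = length p" unfolding q_def by simp
  have cq: "closed_path Ar tail head q" unfolding q_def by (rule closed_rotate[OF prim_closed[OF pc]])
  have dq: "distinct q" unfolding q_def using prim_facts(3)[OF pc] by simp
  have sq: "set q = set p" unfolding q_def by simp
  have qne: "q \<noteq> []" using lq len by auto
  have lastq: "last q = a0"
  proof -
    have "q \<noteq> []" using lq len by auto
    then have "last q = q ! (length p - 1)" using lq by (simp add: last_conv_nth)
    also have "\<dots> = p ! ((Suc k + (length p - 1)) mod length p)" unfolding q_def
      by (rule nth_rotate) (use len in auto)
    also have "(Suc k + (length p - 1)) mod length p = k"
    proof -
      have "Suc k + (length p - 1) = k + length p" using len by simp
      then show ?thesis using k by simp
    qed
    finally show ?thesis using k by simp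
  qed
  define q' where "q' = butlast q"
  have lq': "length q' = length p - 1" unfolding q'_def using lq by simp
  have cons: "\<And>i. Suc i < length q \<Longrightarrow> head (q!i) = tail (q!Suc i)"
    using cq unfolding closed_path_def is_path_def by auto
  have cl: "tail (q!0) = head (last q)" using cq unfolding closed_path_def by auto
  have nth': "\<And>i. i < length q' \<Longrightarrow> q' ! i = q ! i" unfolding q'_def by (simp add: nth_butlast)
  have sq': "set q' = set p - {a0}"
  proof -
    have "q = q' @ [a0]" unfolding q'_def using lastq lq len
      using append_butlast_last_id[OF qne] by simp
    then have "a0 \<notin> set q'" "set q = insert a0 (set q')" using dq by auto
    then show ?thesis using sq by auto
  qed
  have ne: "q' \<noteq> []" using lq' len by auto
  have "conn (set q')"
    by (rule path_conn[OF ne]) (use cons nth' lq' lq in auto)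
  then show "conn (set p - {a0})" using sq' by simp
  have h1: "head a0 = tail (q'!0)" using cl lastq nth'[of 0] ne by simp
  have h2: "tail a0 = head (q' ! (length p - 2))"
  proof -
    have s: "Suc (length p - 2) = length p - 1" using len by simp
    have "head (q ! (length p - 2)) = tail (q ! Suc (length p - 2))" using cons[of "length p - 2"] len lq s by simp
    then have "tail (q ! (length p - 1)) = head (q ! (length p - 2))" using s by simp
    moreover have "q ! (length p - 1) = a0" using lastq lq qne by (simp add: last_conv_nth)
    moreover have "q' ! (length p - 2) = q ! (length p - 2)" using nth' lq' len by simp
    ultimately show ?thesis by simp
  qed
  have "q'!0 \<in> set q'" "q' ! (length p - 2) \<in> set q'" using ne lq' len by auto
  then show "ends a0 \<subseteq> VA (set p - {a0})" using h1 h2 sq' unfolding ends_def arrow_verts_def by auto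
qed

end

locale qv = gr +
  fixes Ar :: "'a set"
  assumes finAr: "finite Ar"
begin

definition bal :: "('a \<Rightarrow> nat) \<Rightarrow> bool" where
  "bal \<rho> \<longleftrightarrow> (\<forall>v. (\<Sum>a\<in>{a\<in>Ar. tail a = v}. \<rho> a) = (\<Sum>a\<in>{a\<in>Ar. head a = v}. \<rho> a))"

lemma bal_closed:
  assumes "closed_path Ar tail head q" shows "bal (count_list q)"
  unfolding bal_def
proof
  fix v
  have h: "set q \<subseteq> Ar" "map head q = rotate1 (map tail q)" using assms closed_path_iff by auto
  have "(\<Sum>a\<in>{a\<in>Ar. tail a = v}. count_list q a) = length (filter (\<lambda>a. a \<in> {a\<in>Ar. tail a = v}) q)"
    by (rule sum_count_list) (use finAr in auto)
  also have "filter (\<lambda>a. a \<in> {a\<in>Ar. tail a = v}) q = filter (\<lambda>a. tail a = v) q"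
    using h(1) by (intro filter_cong) auto
  also have "length \<dots> = count_list (map tail q) v" using count_list_map_filter by metis
  finally have 1: "(\<Sum>a\<in>{a\<in>Ar. tail a = v}. count_list q a) = count_list (map tail q) v" .
  have "(\<Sum>a\<in>{a\<in>Ar. head a = v}. count_list q a) = length (filter (\<lambda>a. a \<in> {a\<in>Ar. head a = v}) q)"
    by (rule sum_count_list) (use finAr in auto)
  also have "filter (\<lambda>a. a \<in> {a\<in>Ar. head a = v}) q = filter (\<lambda>a. head a = v) q"
    using h(1) by (intro filter_cong) auto
  also have "length \<dots> = count_list (map head q) v" using count_list_map_filter by metis
  also have "\<dots> = count_list (map tail q) v" using h(2) count_list_rotate1 by metis
  finally show "(\<Sum>a\<in>{a\<in>Ar. tail a = v}. count_list q a) = (\<Sum>a\<in>{a\<in>Ar. head a = v}. count_list q a)"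
    using 1 by simp
qed

lemma bal_out:
  assumes "bal \<rho>" "a \<in> Ar" "\<rho> a \<ge> 1"
  shows "\<exists>b\<in>Ar. tail b = head a \<and> \<rho> b \<ge> 1"
proof (rule ccontr)
  assume "\<not> ?thesis"
  then have "(\<Sum>b\<in>{b\<in>Ar. tail b = head a}. \<rho> b) = 0" by (intro sum.neutral) auto
  moreover have "\<rho> a \<le> (\<Sum>b\<in>{b\<in>Ar. head b = head a}. \<rho> b)"
    using assms(2) finAr by (intro member_le_sum) auto
  ultimately show False using assms unfolding bal_def by auto
qed

lemma closed_in:
  assumes K: "K \<subseteq> Ar" "a0 \<in> K" and nx: "\<And>a. a \<in> K \<Longrightarrow> \<exists>b\<in>K. tail b = head a"
  shows "\<exists>q. closed_path Ar tail head q \<and> set q \<subseteq> K"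
proof -
  have finK: "finite K" using K finAr finite_subset by auto
  define nxt where "nxt a = (SOME b. b \<in> K \<and> tail b = head a)" for a
  have nxt: "nxt a \<in> K" "tail (nxt a) = head a" if "a \<in> K" for a
    using someI_ex[of "\<lambda>b. b \<in> K \<and> tail b = head a"] nx[OF that] unfolding nxt_def by auto
  define w where "w = rec_nat a0 (\<lambda>_ a. nxt a)"
  have w0: "w 0 = a0" and wS: "\<And>i. w (Suc i) = nxt (w i)" unfolding w_def by auto
  have wK: "w i \<in> K" for i by (induction i) (auto simp: w0 wS K nxt)
  have wt: "tail (w (Suc i)) = head (w i)" for i using wS nxt wK by auto
  let ?N = "card (head ` K)"
  have "\<not> inj_on (\<lambda>i. head (w i)) {0..?N}"
  proof
    assume inj: "inj_on (\<lambda>i. head (w i)) {0..?N}"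
    have "(\<lambda>i. head (w i)) ` {0..?N} \<subseteq> head ` K" using wK by auto
    then have "card {0..?N} \<le> ?N" using card_inj_on_le[OF inj] finK by auto
    then show False by simp
  qed
  then obtain i j where ij: "i \<in> {0..?N}" "j \<in> {0..?N}" "i \<noteq> j" "head (w i) = head (w j)"
    unfolding inj_on_def by blast
  obtain i j where ij: "i < j" "head (w i) = head (w j)"
    using ij by (metis linorder_neqE_nat)
  define q where "q = map w [Suc i..<Suc j]"
  have lq: "length q = j - i" unfolding q_def by auto
  have qn: "\<And>t. t < j - i \<Longrightarrow> q ! t = w (Suc i + t)" unfolding q_def by (simp add: nth_map_upt del: upt_Suc)
  have "q \<noteq> []" using lq ij by auto
  moreover have "set q \<subseteq> K" unfolding q_def using wK by auto
  moreover have "head (q!t) = tail (q!Suc t)" if "Suc t < length q" for t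
    using that lq qn wt by auto
  moreover have "tail (q!0) = head (last q)"
  proof -
    have "last q = q ! (j - i - 1)" using lq \<open>q \<noteq> []\<close> by (simp add: last_conv_nth)
    also have "\<dots> = w j" using qn[of "j - i - 1"] ij by simp
    finally show ?thesis using qn[of 0] ij wt by simp
  qed
  ultimately show ?thesis unfolding closed_path_def is_path_def using K(1) by blast
qed

lemma card_ge2:
  assumes "finite S" "card S \<noteq> 0" "card S \<noteq> 1"
  shows "\<exists>x\<in>S. \<exists>y\<in>S. x \<noteq> y"
proof (rule ccontr)
  assume nn: "\<not> (\<exists>x\<in>S. \<exists>y\<in>S. x \<noteq> y)"
  obtain x where x: "x \<in> S" using assms(2) by (metis card.empty ex_in_conv)
  then have "S \<subseteq> {x}" using nn by auto
  then have "card S \<le> 1" using card_mono[of "{x}" S] by auto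
  then show False using assms by auto
qed

lemma min_prim:
  "closed_path Ar tail head q \<Longrightarrow> set q \<subseteq> K \<Longrightarrow> \<exists>p. primitive_closed Ar tail head p \<and> set p \<subseteq> K"
proof (induction "length q" arbitrary: q rule: less_induct)
  case less
  show ?case
  proof (cases "primitive_closed Ar tail head q")
    case True then show ?thesis using less by auto
  next
    case False
    have cq: "q \<noteq> []" "set q \<subseteq> Ar" "\<And>i. Suc i < length q \<Longrightarrow> head (q!i) = tail (q!Suc i)"
      "tail (q!0) = head (last q)" using less(2) unfolding closed_path_def is_path_def by auto
    then obtain v where v: "v \<in> path_verts tail head q" "card {i. i < length q \<and> head (q ! i) = v} \<noteq> 1"
      using False less(2) unfolding primitive_closed_def by auto
    let ?S = "{i. i < length q \<and> head (q ! i) = v}"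
    have "?S \<noteq> {}"
    proof (cases "v = tail (q!0)")
      case True
      then have "head (q ! (length q - 1)) = v" using cq by (simp add: last_conv_nth)
      moreover have "length q - 1 < length q" using cq(1) by simp
      ultimately show ?thesis by blast
    next
      case False
      then have "v \<in> head ` set q" using v(1) unfolding path_verts_def by auto
      then show ?thesis by (auto simp: in_set_conv_nth)
    qed
    then have "card ?S \<noteq> 0" by simp
    then obtain i j where ij0: "i \<in> ?S" "j \<in> ?S" "i \<noteq> j" using card_ge2[of ?S] v(2) by auto
    obtain i j where ij: "i < j" "j < length q" "head (q!i) = v" "head (q!j) = v"
      using ij0 by (metis (mono_tags, lifting) linorder_neqE_nat mem_Collect_eq)
    define r where "r = take (j - i) (drop (Suc i) q)"
    have lr: "length r = j - i" unfolding r_def using ij by simp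
    have rn: "\<And>t. t < j - i \<Longrightarrow> r ! t = q ! (Suc i + t)" unfolding r_def using ij by simp
    have rne: "r \<noteq> []" using lr ij by auto
    have sr: "set r \<subseteq> set q" unfolding r_def by (meson in_set_dropD in_set_takeD subsetI)
    have "closed_path Ar tail head r"
      unfolding closed_path_def is_path_def
    proof (intro conjI allI impI)
      show "r \<noteq> []" by (rule rne)
      show "set r \<subseteq> Ar" using sr cq by auto
      fix t assume "Suc t < length r"
      then show "head (r ! t) = tail (r ! Suc t)" using rn lr cq(3)[of "Suc i + t"] ij by auto
    next
      have "last r = r ! (j - i - 1)" using lr rne by (simp add: last_conv_nth)
      also have "\<dots> = q ! j" using rn[of "j - i - 1"] ij by simp
      finally show "tail (r!0) = head (last r)" using rn[of 0] ij cq(3)[of i] by simp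
    qed
    moreover have "length r < length q" using lr ij by simp
    ultimately show ?thesis using less(1)[of r] sr less(3) by auto
  qed
qed

lemma exists_prim:
  assumes "bal \<rho>" "a0 \<in> Ar" "\<rho> a0 \<ge> 1"
  shows "\<exists>p. primitive_closed Ar tail head p \<and> set p \<subseteq> {a\<in>Ar. \<rho> a \<ge> 1}"
proof -
  let ?K = "{a\<in>Ar. \<rho> a \<ge> 1}"
  have "\<exists>q. closed_path Ar tail head q \<and> set q \<subseteq> ?K"
    by (rule closed_in[of ?K a0]) (use assms bal_out in auto)
  then show ?thesis using min_prim by blast
qed

end

locale mc = qv +
  fixes \<delta> :: "'a \<Rightarrow> nat" and M :: nat
  assumes dpos: "\<And>a. a \<in> Ar \<Longrightarrow> \<delta> a \<ge> 1"
  and Aconn: "conn Ar"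
  and om2: "\<And>p. primitive_closed Ar tail head p \<Longrightarrow> (\<forall>a\<in>set p. \<delta> a \<ge> 2) \<Longrightarrow>
      supp_arrows Ar (\<lambda>b. \<delta> b - 2 * count_list p b) \<noteq> {} \<and>
      \<not> conn (supp_arrows Ar (\<lambda>b. \<delta> b - 2 * count_list p b))"
  and cycM: "\<And>p. primitive_closed Ar tail head p \<Longrightarrow> length p \<le> M"
  and MV: "M \<le> card (VA Ar)"
begin

abbreviation sp :: "('a \<Rightarrow> nat) \<Rightarrow> 'a set" where "sp f \<equiv> supp_arrows Ar f"

definition gsum :: "'a set \<Rightarrow> 'a set \<Rightarrow> nat" where
  "gsum K Ou = (\<Sum>Z\<in>comps Ou. M - card (VA Z \<inter> VA K))"

definition Phi :: "'a set \<Rightarrow> 'a set \<Rightarrow> int" where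
  "Phi K Ou = int M * cyc K + 2 * int (card (VA K)) - 2 * int M + int (gsum K Ou)"

lemma sp_sub: "sp f \<subseteq> Ar" unfolding supp_arrows_def by auto
lemma fin_sp: "finite (sp f)" using finite_subset[OF sp_sub finAr] .
lemma sp_iff: "a \<in> sp f \<longleftrightarrow> a \<in> Ar \<and> f a \<ge> 1" unfolding supp_arrows_def by auto

end

context mc begin

lemma sum_card_VA:
  assumes "finite A" "finite S"
  shows "(\<Sum>Z\<in>comps A. card (S \<inter> VA Z)) = card (S \<inter> VA A)"
proof -
  have finZ: "\<And>Z. Z \<in> comps A \<Longrightarrow> finite Z" using assms comps_sub finite_subset by blast
  have "S \<inter> VA A = (\<Union>Z\<in>comps A. S \<inter> VA Z)" using VA_Union[of "comps A"] Union_comps by auto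
  moreover have "card (\<Union>Z\<in>comps A. S \<inter> VA Z) = (\<Sum>Z\<in>comps A. card (S \<inter> VA Z))"
    by (rule card_UN_disjoint) (auto simp: finite_comps assms dest: comps_disj_V)
  ultimately show ?thesis by simp
qed

lemma ch_bal:
  assumes b: "bal \<rho>'" and Z: "Z \<in> comps (sp \<rho>')"
  shows "bal (\<lambda>a. if a \<in> Z then \<rho>' a else 0)"
  unfolding bal_def
proof
  fix v
  have ZK: "Z \<subseteq> sp \<rho>'" using comps_sub[OF Z] .
  have out0: "\<rho>' a = 0" if "a \<in> Ar" "a \<notin> Z" "v \<in> ends a" "v \<in> VA Z" for a
  proof (rule ccontr)
    assume "\<rho>' a \<noteq> 0"
    then have "a \<in> sp \<rho>' - Z" using that sp_iff by auto
    then have "ends a \<inter> VA Z = {}" using Z unfolding comps_def closedin_def by auto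
    then show False using that by auto
  qed
  show "(\<Sum>a\<in>{a\<in>Ar. tail a = v}. if a \<in> Z then \<rho>' a else 0) =
        (\<Sum>a\<in>{a\<in>Ar. head a = v}. if a \<in> Z then \<rho>' a else 0)"
  proof (cases "v \<in> VA Z")
    case True
    have 1: "(\<Sum>a\<in>{a\<in>Ar. tail a = v}. if a \<in> Z then \<rho>' a else 0) = (\<Sum>a\<in>{a\<in>Ar. tail a = v}. \<rho>' a)"
      by (rule sum.cong) (use out0 True in \<open>auto simp: ends_def\<close>)
    have 2: "(\<Sum>a\<in>{a\<in>Ar. head a = v}. if a \<in> Z then \<rho>' a else 0) = (\<Sum>a\<in>{a\<in>Ar. head a = v}. \<rho>' a)"
      by (rule sum.cong) (use out0 True in \<open>auto simp: ends_def\<close>)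
    show ?thesis using 1 2 b unfolding bal_def by simp
  next
    case False
    have "a \<notin> Z" if "tail a = v \<or> head a = v" for a
      using that False ends_sub[of a Z] unfolding ends_def by auto
    then show ?thesis by (auto intro!: sum.neutral)
  qed
qed

lemma sum_ch:
  "(\<Sum>a\<in>Ar. \<rho>' a) = (\<Sum>Z\<in>comps (sp \<rho>'). \<Sum>a\<in>Ar. if a \<in> Z then \<rho>' a else 0)"
proof -
  have fz: "\<forall>Z\<in>comps (sp \<rho>'). finite Z" using finite_subset[OF comps_sub fin_sp] by blast
  have dj: "\<forall>A\<in>comps (sp \<rho>'). \<forall>B\<in>comps (sp \<rho>'). A \<noteq> B \<longrightarrow> A \<inter> B = {}"
    using comps_disj by blast
  have "(\<Sum>a\<in>Ar. \<rho>' a) = (\<Sum>a\<in>sp \<rho>'. \<rho>' a)"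
    by (rule sum.mono_neutral_right) (auto simp: finAr sp_sub sp_iff)
  also have "\<dots> = (\<Sum>a\<in>\<Union>(comps (sp \<rho>')). \<rho>' a)" using Union_comps by simp
  also have "\<dots> = (\<Sum>Z\<in>comps (sp \<rho>'). \<Sum>a\<in>Z. \<rho>' a)"
    using sum.Union_disjoint[OF fz dj, of \<rho>'] by (simp add: o_def)
  also have "\<dots> = (\<Sum>Z\<in>comps (sp \<rho>'). \<Sum>a\<in>Ar. if a \<in> Z then \<rho>' a else 0)"
  proof (rule sum.cong)
    fix Z assume Z: "Z \<in> comps (sp \<rho>')"
    have "Z \<subseteq> Ar" using comps_sub[OF Z] sp_sub by auto
    then have "Ar \<inter> Z = Z" by auto
    then show "(\<Sum>a\<in>Z. \<rho>' a) = (\<Sum>a\<in>Ar. if a \<in> Z then \<rho>' a else 0)"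
      using sum.inter_restrict[OF finAr, of \<rho>' Z] by simp
  qed simp
  finally show ?thesis .
qed

lemma gsum_union:
  assumes X: "conn X" "finite X" and W: "W \<subseteq> X" and fO: "finite Ou" and VK: "VA K \<subseteq> VA Z \<union> VA X"
  shows "gsum Z (Ou \<union> X) \<le> (M - card (VA W \<inter> VA Z)) +
           (\<Sum>Y\<in>{Y\<in>comps Ou. VA Y \<inter> VA X = {}}. M - card (VA Y \<inter> VA K))"
proof -
  let ?U = "{Y\<in>comps Ou. VA Y \<inter> VA X = {}}"
  let ?B = "X \<union> \<Union>{Y\<in>comps Ou. VA Y \<inter> VA X \<noteq> {}}"
  have c: "comps (Ou \<union> X) = insert ?B ?U" "?B \<notin> ?U" "X \<subseteq> ?B"
    using comps_union_conn[OF X(1), of Ou] by auto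
  have finU: "finite ?U" using finite_comps[OF fO] by auto
  have finB: "finite ?B"
    using finite_subset[OF _ finite_UnI[OF fO X(2)], of ?B] comps_sub by blast
  have "gsum Z (Ou \<union> X) = (M - card (VA ?B \<inter> VA Z)) + (\<Sum>Y\<in>?U. M - card (VA Y \<inter> VA Z))"
    unfolding gsum_def c(1) using c(2) finU by simp
  also have "M - card (VA ?B \<inter> VA Z) \<le> M - card (VA W \<inter> VA Z)"
  proof -
    have "VA W \<subseteq> VA ?B" using VA_mono W c(3) by blast
    then have "card (VA W \<inter> VA Z) \<le> card (VA ?B \<inter> VA Z)"
      using finite_VA[OF finB] by (intro card_mono) auto
    then show ?thesis by simp
  qed
  also have "(\<Sum>Y\<in>?U. M - card (VA Y \<inter> VA Z)) \<le> (\<Sum>Y\<in>?U. M - card (VA Y \<inter> VA K))"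
  proof (rule sum_mono)
    fix Y assume Y: "Y \<in> ?U"
    have fY: "finite Y" using comps_sub[of Y Ou] Y fO finite_subset by auto
    have "VA Y \<inter> VA K \<subseteq> VA Y \<inter> VA Z" using Y VK by auto
    then have "card (VA Y \<inter> VA K) \<le> card (VA Y \<inter> VA Z)" by (intro card_mono) (auto simp: finite_VA fY)
    then show "M - card (VA Y \<inter> VA Z) \<le> M - card (VA Y \<inter> VA K)" by simp
  qed
  finally show ?thesis by simp
qed

end

context mc begin

lemma main_step:
  assumes IH: "\<And>\<sigma>. (\<Sum>a\<in>Ar. \<sigma> a) < (\<Sum>a\<in>Ar. \<rho> a) \<Longrightarrow> (\<forall>a\<in>Ar. \<sigma> a \<le> \<delta> a) \<Longrightarrow> bal \<sigma> \<Longrightarrow>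
      conn (sp \<sigma>) \<Longrightarrow> int (\<Sum>a\<in>Ar. \<sigma> a) \<le> Phi (sp \<sigma>) (sp (\<lambda>a. \<delta> a - \<sigma> a))"
  and le: "\<forall>a\<in>Ar. \<rho> a \<le> \<delta> a" and bal: "bal \<rho>" and cK0: "conn (sp \<rho>)"
  shows "int (\<Sum>a\<in>Ar. \<rho> a) \<le> Phi (sp \<rho>) (sp (\<lambda>a. \<delta> a - \<rho> a))"
proof -
  define K where "K = sp \<rho>"
  define Ou where "Ou = sp (\<lambda>a. \<delta> a - \<rho> a)"
  have cK: "conn K" using cK0 K_def by simp
  have KAr: "K \<subseteq> Ar" using sp_sub K_def by auto
  have finK: "finite K" using fin_sp K_def by auto
  have finO: "finite Ou" using fin_sp Ou_def by auto
  have OAr: "Ou \<subseteq> Ar" using sp_sub Ou_def by auto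
  have Kne: "K \<noteq> {}" using cK unfolding conn_def by auto
  have Kiff: "\<And>a. a \<in> K \<longleftrightarrow> a \<in> Ar \<and> \<rho> a \<ge> 1" unfolding K_def using sp_iff by auto
  have Oiff: "\<And>a. a \<in> Ou \<longleftrightarrow> a \<in> Ar \<and> \<delta> a - \<rho> a \<ge> 1" unfolding Ou_def using sp_iff by auto
  have ArOK: "Ar = K \<union> Ou"
  proof
    show "Ar \<subseteq> K \<union> Ou"
    proof
      fix a assume a: "a \<in> Ar"
      show "a \<in> K \<union> Ou" using dpos[OF a] Kiff Oiff a by (cases "\<rho> a \<ge> 1") auto
    qed
    show "K \<union> Ou \<subseteq> Ar" using KAr OAr by auto
  qed
  have touchO: "\<And>Z. Z \<in> comps Ou \<Longrightarrow> VA Z \<inter> VA K \<noteq> {}"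
    using touch[of K Ou] Aconn ArOK Kne by auto
  obtain a1 where a1: "a1 \<in> K" using Kne by auto
  obtain p where p: "primitive_closed Ar tail head p" "set p \<subseteq> K"
    using exists_prim[OF bal, of a1] a1 Kiff unfolding K_def supp_arrows_def by auto
  define C where "C = set p"
  define l where "l = length p"
  have CK: "C \<subseteq> K" using p C_def by auto
  have cnt: "\<And>a. count_list p a = (if a \<in> C then 1 else 0)" using prim_facts(9)[OF p(1)] C_def by auto
  have lC: "card (VA C) = l" using prim_facts(7)[OF p(1)] C_def l_def by auto
  have cardC: "card C = l" using prim_facts(5)[OF p(1)] C_def l_def by auto
  have lM: "l \<le> M" using cycM[OF p(1)] l_def by auto
  have l1: "l \<ge> 1" using prim_facts(1)[OF p(1)] l_def by (cases p) auto
  have cC: "conn C" using prim_conn[OF p(1)] C_def by auto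
  have finC: "finite C" using C_def by auto
  define k where "k = (if \<forall>a\<in>C. \<rho> a \<ge> 2 then 2 else (1::nat))"
  have kC: "\<And>a. a \<in> C \<Longrightarrow> k \<le> \<rho> a" using CK Kiff unfolding k_def by auto
  have k12: "k = 1 \<or> k = 2" unfolding k_def by auto
  define \<rho>' where "\<rho>' a = \<rho> a - k * count_list p a" for a
  define K' where "K' = sp \<rho>'"
  have r'C: "\<And>a. a \<in> C \<Longrightarrow> \<rho>' a = \<rho> a - k" unfolding \<rho>'_def using cnt by simp
  have r'nC: "\<And>a. a \<notin> C \<Longrightarrow> \<rho>' a = \<rho> a" unfolding \<rho>'_def using cnt by simp
  have K'iff: "\<And>a. a \<in> K' \<longleftrightarrow> a \<in> Ar \<and> \<rho>' a \<ge> 1" unfolding K'_def using sp_iff by auto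
  have K'K: "K' \<subseteq> K" using K'iff Kiff r'C r'nC by (metis diff_le_self le_trans subsetI)
  have KCK': "K = C \<union> K'"
  proof
    show "K \<subseteq> C \<union> K'"
    proof
      fix x assume x: "x \<in> K"
      show "x \<in> C \<union> K'"
      proof (cases "x \<in> C")
        case False then show ?thesis using x Kiff K'iff r'nC[OF False] by auto
      qed auto
    qed
    show "C \<union> K' \<subseteq> K" using CK K'K by auto
  qed
  have finK': "finite K'" using K'K finK finite_subset by auto
  have le': "\<And>a. a \<in> Ar \<Longrightarrow> k * count_list p a \<le> \<rho> a" using cnt kC by auto
  have cntsum: "(\<Sum>a\<in>Ar. count_list p a) = l"
  proof -
    have "(\<Sum>a\<in>Ar. count_list p a) = length (filter (\<lambda>a. a \<in> Ar) p)" by (rule sum_count_list[OF finAr])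
    also have "filter (\<lambda>a. a \<in> Ar) p = p" using prim_facts(2)[OF p(1)] by (auto intro: filter_True)
    finally show ?thesis using l_def by simp
  qed
  have sumr: "(\<Sum>a\<in>Ar. \<rho> a) = k * l + (\<Sum>a\<in>Ar. \<rho>' a)"
  proof -
    have "(\<Sum>a\<in>Ar. \<rho> a) = (\<Sum>a\<in>Ar. \<rho>' a + k * count_list p a)"
      by (rule sum.cong) (use le' in \<open>auto simp: \<rho>'_def\<close>)
    also have "\<dots> = (\<Sum>a\<in>Ar. \<rho>' a) + k * (\<Sum>a\<in>Ar. count_list p a)"
      by (simp add: sum.distrib sum_distrib_left)
    finally show ?thesis using cntsum by simp
  qed
  have bal': "bal \<rho>'"
    unfolding bal_def
  proof
    fix v
    have bp: "bal (count_list p)" using bal_closed[OF prim_closed[OF p(1)]] .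
    have "(\<Sum>a\<in>{a\<in>Ar. tail a = v}. \<rho>' a) = (\<Sum>a\<in>{a\<in>Ar. tail a = v}. \<rho> a) - k * (\<Sum>a\<in>{a\<in>Ar. tail a = v}. count_list p a)"
      unfolding \<rho>'_def by (subst sum_subtractf_nat) (use le' in \<open>auto simp: sum_distrib_left\<close>)
    also have "\<dots> = (\<Sum>a\<in>{a\<in>Ar. head a = v}. \<rho> a) - k * (\<Sum>a\<in>{a\<in>Ar. head a = v}. count_list p a)"
      using bal bp unfolding bal_def by simp
    also have "\<dots> = (\<Sum>a\<in>{a\<in>Ar. head a = v}. \<rho>' a)"
      unfolding \<rho>'_def by (subst sum_subtractf_nat) (use le' in \<open>auto simp: sum_distrib_left\<close>)
    finally show "(\<Sum>a\<in>{a\<in>Ar. tail a = v}. \<rho>' a) = (\<Sum>a\<in>{a\<in>Ar. head a = v}. \<rho>' a)" .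
  qed
  have lt: "(\<Sum>a\<in>Ar. \<rho>' a) < (\<Sum>a\<in>Ar. \<rho> a)" using sumr l1 k12 by auto
  have d2: "k = 2 \<Longrightarrow> \<forall>a\<in>set p. \<delta> a \<ge> 2"
    using kC le CK KAr C_def by (metis le_trans subset_iff)
  have s2: "k = 2 \<Longrightarrow> sp (\<lambda>b. \<delta> b - 2 * count_list p b) = Ou \<union> K'"
  proof -
    assume k2: "k = 2"
    have "\<delta> b - 2 * count_list p b = (\<delta> b - \<rho> b) + \<rho>' b" if "b \<in> Ar" for b
      using le' [OF that] le that k2 unfolding \<rho>'_def by auto
    then show ?thesis using Oiff K'iff unfolding supp_arrows_def by auto
  qed
  have om: "k = 2 \<Longrightarrow> Ou \<union> K' \<noteq> {} \<and> \<not> conn (Ou \<union> K')"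
    using om2[OF p(1) d2] s2 by simp
  have a0ex: "\<exists>a0\<in>C. a0 \<notin> K'"
  proof (cases "k = 2")
    case True
    show ?thesis
    proof (rule ccontr)
      assume "\<not> ?thesis"
      then have "K' = K" using KCK' by auto
      then have "Ou \<union> K' = Ar" using ArOK by auto
      then show False using om[OF True] Aconn by simp
    qed
  next
    case False
    then have k1: "k = 1" using k12 by auto
    then obtain a where a: "a \<in> C" "\<rho> a < 2" unfolding k_def by (auto split: if_splits)
    then have "\<rho>' a = 0" using r'C k1 by auto
    then have "a \<notin> K'" using K'iff by auto
    then show ?thesis using a by blast
  qed
  then obtain a0 where a0: "a0 \<in> C" "a0 \<notin> K'" by auto
  have cycKK': "cyc K' + 1 \<le> cyc K"
  proof -
    have ins: "K = insert a0 (K - {a0})" using a0 CK by auto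
    have fin1: "finite (K - {a0})" using finK by auto
    have cond: "tail a0 = head a0 \<or> (\<exists>Z\<in>comps (K - {a0}). ends a0 \<subseteq> VA Z)"
    proof (cases "l = 1")
      case True then show ?thesis using prim_loop[OF p(1)] a0 C_def l_def by auto
    next
      case False
      then have l2: "length p \<ge> 2" using l1 l_def by auto
      have "conn (C - {a0})" "ends a0 \<subseteq> VA (C - {a0})" using prim_minus[OF p(1) _ l2] a0 C_def by auto
      moreover have "C - {a0} \<subseteq> K - {a0}" using CK by auto
      ultimately obtain Z where "Z \<in> comps (K - {a0})" "C - {a0} \<subseteq> Z" using conn_sub_comp by blast
      then show ?thesis using \<open>ends a0 \<subseteq> VA (C - {a0})\<close> VA_mono by blast
    qed
    have "cyc (K - {a0}) + 1 \<le> cyc K" using cyc_insert(2)[OF fin1, of a0] cond ins by auto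
    moreover have "cyc K' \<le> cyc (K - {a0})" using cyc_mono[OF fin1] K'K a0 by auto
    ultimately show ?thesis by simp
  qed
  have goal_eq: "Phi (sp \<rho>) (sp (\<lambda>a. \<delta> a - \<rho> a)) = Phi K Ou" unfolding K_def Ou_def by simp
  define G where "G = gsum K Ou"
  define F where "F Y = M - card (VA Y \<inter> VA K)" for Y
  have G_F: "G = (\<Sum>Y\<in>comps Ou. F Y)" unfolding G_def gsum_def F_def by simp
  have finCO: "finite (comps Ou)" using finite_comps[OF finO] .
  have Phi_eq: "Phi K Ou = int M * cyc K + 2 * int (card (VA K)) - 2 * int M + int G"
    unfolding Phi_def G_def by simp
  have finVK: "finite (VA K)" using finite_VA[OF finK] .
  have VKC: "VA K = VA C \<union> VA K'" using KCK' VA_Un by simp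
  have FYl: "\<And>Y. int (F Y) \<ge> int M - int (card (VA K))"
  proof -
    fix Y
    have "card (VA Y \<inter> VA K) \<le> card (VA K)" using finVK by (intro card_mono) auto
    then show "int (F Y) \<ge> int M - int (card (VA K))" unfolding F_def by linarith
  qed
  show ?thesis
  proof (cases "K' = {}")
    case True
    then have KC: "K = C" using KCK' by auto
    have r'0: "\<rho>' a = 0" if aA: "a \<in> Ar" for a
    proof -
      have "a \<notin> K'" using True by simp
      then have "\<not> 1 \<le> \<rho>' a" using K'iff aA by auto
      then show ?thesis by simp
    qed
    have s: "(\<Sum>a\<in>Ar. \<rho> a) = k * l" using sumr r'0 by simp
    have cycK: "cyc K = 1" using cyc_conn[OF cK] KC cardC lC by simp
    have nK: "card (VA K) = l" using KC lC by simp
    have "int (k * l) \<le> int M * 1 + 2 * int l - 2 * int M + int G"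
    proof (cases "k = 2")
      case k2: True
      have oo: "Ou \<noteq> {}" "\<not> conn Ou" using om[OF k2] True by auto
      obtain Y1 where Y1: "Y1 \<in> comps Ou" using oo(1) Union_comps[of Ou] by auto
      obtain Y2 where Y2: "Y2 \<in> comps Ou" "Y2 \<noteq> Y1"
      proof (rule ccontr)
        assume "\<not> thesis"
        then have "comps Ou = {Y1}" using Y1 that by auto
        then have "Ou = Y1" using Union_comps[of Ou] by auto
        then show False using oo(2) comps_conn[OF Y1] by simp
      qed
      have "F Y1 + F Y2 = (\<Sum>Y\<in>{Y1,Y2}. F Y)" using Y2 by simp
      also have "\<dots> \<le> G" unfolding G_F by (rule sum_mono2) (use finCO Y1 Y2 in auto)
      finally have G12: "F Y1 + F Y2 \<le> G" .
      have "card (VA Y1 \<inter> VA K) + card (VA Y2 \<inter> VA K) = card ((VA Y1 \<inter> VA K) \<union> (VA Y2 \<inter> VA K))"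
        using comps_disj_V[OF Y1 Y2(1)] Y2(2) finVK by (intro card_Un_disjoint[symmetric]) auto
      also have "\<dots> \<le> card (VA K)" using finVK by (intro card_mono) auto
      finally have "card (VA Y1 \<inter> VA K) + card (VA Y2 \<inter> VA K) \<le> l" using nK by simp
      then have "int (F Y1) + int (F Y2) \<ge> 2 * int M - int l" unfolding F_def by linarith
      moreover have "int (F Y1) + int (F Y2) \<le> int G" using G12 by (simp flip: of_nat_add)
      moreover have "int (k * l) = 2 * int l" using k2 by simp
      ultimately show ?thesis using lM by linarith
    next
      case False
      then have k1: "k = 1" using k12 by auto
      show ?thesis
      proof (cases "Ou = {}")
        case True
        then have "Ar = K" using ArOK by auto
        then have "M \<le> l" using MV nK by simp
        then show ?thesis using k1 by simp
      next
        case False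
        obtain Y where Y: "Y \<in> comps Ou" using False Union_comps[of Ou] by auto
        have "F Y \<le> G" unfolding G_F by (rule member_le_sum) (use finCO Y in auto)
        then have "int (F Y) \<le> int G" by simp
        then show ?thesis using FYl[of Y] nK k1 by simp
      qed
    qed
    then show ?thesis using goal_eq Phi_eq s cycK nK by simp
  next
    case False
    define r where "r = card (comps K')"
    have finCK': "finite (comps K')" using finite_comps[OF finK'] .
    have r1: "r \<ge> 1"
    proof -
      have "comps K' \<noteq> {}" using False Union_comps[of K'] by auto
      then show ?thesis using finCK' unfolding r_def by (simp add: Suc_leI card_gt_0_iff)
    qed
    define ch where "ch Z a = (if a \<in> Z then \<rho>' a else 0)" for Z a
    define X where "X Z = C \<union> (K' - Z)" for Z
    define U where "U Z = {Y\<in>comps Ou. VA Y \<inter> VA (X Z) = {}}" for Z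
    have Cne: "C \<noteq> {}" using cC unfolding conn_def by auto
    have ZtouchC: "\<And>Z. Z \<in> comps K' \<Longrightarrow> VA Z \<inter> VA C \<noteq> {}"
      using touch[of C K'] cK KCK' Cne by auto
    have K'minus: "\<And>Z. Z \<in> comps K' \<Longrightarrow> K' - Z = \<Union>(comps K' - {Z})"
    proof -
      fix Z assume Z: "Z \<in> comps K'"
      show "K' - Z = \<Union>(comps K' - {Z})"
      proof
        show "K' - Z \<subseteq> \<Union>(comps K' - {Z})" using Union_comps[of K'] by auto
        show "\<Union>(comps K' - {Z}) \<subseteq> K' - Z" using comps_sub comps_disj[OF Z] by fastforce
      qed
    qed
    have cX: "\<And>Z. Z \<in> comps K' \<Longrightarrow> conn (X Z)"
    proof -
      fix Z assume Z: "Z \<in> comps K'"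
      have "conn (C \<union> \<Union>(comps K' - {Z}))"
        by (rule conn_union_family[OF cC]) (use comps_conn ZtouchC in auto)
      then show "conn (X Z)" unfolding X_def using K'minus[OF Z] by simp
    qed
    have finX: "\<And>Z. finite (X Z)" unfolding X_def using finC finK' by auto
    have VKX: "VA K \<subseteq> VA Z \<union> VA (X Z)" if Z: "Z \<in> comps K'" for Z
    proof -
      have "K' = Z \<union> (K' - Z)" using comps_sub[OF Z] by auto
      then have "VA K' = VA Z \<union> VA (K' - Z)" using VA_Un by metis
      then show ?thesis using VKC unfolding X_def VA_Un by auto
    qed
    have CX: "\<And>Z. C \<subseteq> X Z" unfolding X_def by auto
    have spch: "sp (ch Z) = Z" if Z: "Z \<in> comps K'" for Z
    proof -
      have "Z \<subseteq> K'" using comps_sub[OF Z] .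
      then show ?thesis unfolding ch_def supp_arrows_def using K'iff by auto
    qed
    have spd: "\<And>Z. Z \<in> comps K' \<Longrightarrow> sp (\<lambda>a. \<delta> a - ch Z a) = Ou \<union> X Z"
    proof -
      fix Z assume Z: "Z \<in> comps K'"
      have ZK': "Z \<subseteq> K'" using comps_sub[OF Z] .
      show "sp (\<lambda>a. \<delta> a - ch Z a) = Ou \<union> X Z"
      proof (rule set_eqI)
        fix a
        show "a \<in> sp (\<lambda>a. \<delta> a - ch Z a) \<longleftrightarrow> a \<in> Ou \<union> X Z"
        proof (cases "a \<in> Ar")
          case False then show ?thesis using OAr CK KAr K'K unfolding X_def supp_arrows_def by auto
        next
          case aAr: True
          show ?thesis
          proof (cases "a \<in> Z")
            case True
            have "\<rho>' a \<le> \<rho> a" unfolding \<rho>'_def by simp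
            moreover have "a \<in> C \<Longrightarrow> \<rho>' a < \<rho> a" using r'C kC k12 CK Kiff by fastforce
            moreover have "a \<notin> C \<Longrightarrow> \<rho>' a = \<rho> a" using r'nC by simp
            ultimately show ?thesis using True aAr le Oiff unfolding X_def ch_def supp_arrows_def by auto
          next
            case False
            have "a \<in> K \<union> Ou" using aAr ArOK by auto
            then show ?thesis using False aAr dpos[OF aAr] KCK' unfolding X_def ch_def supp_arrows_def by auto
          qed
        qed
      qed
    qed
    have IHZ: "\<And>Z. Z \<in> comps K' \<Longrightarrow> int (\<Sum>a\<in>Ar. ch Z a) \<le> Phi Z (Ou \<union> X Z)"
    proof -
      fix Z assume Z: "Z \<in> comps K'"
      have lech: "\<And>a. ch Z a \<le> \<rho>' a" unfolding ch_def by auto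
      have "(\<Sum>a\<in>Ar. ch Z a) \<le> (\<Sum>a\<in>Ar. \<rho>' a)" by (rule sum_mono) (rule lech)
      then have "(\<Sum>a\<in>Ar. ch Z a) < (\<Sum>a\<in>Ar. \<rho> a)" using lt by simp
      moreover have "\<forall>a\<in>Ar. ch Z a \<le> \<delta> a" using lech le unfolding \<rho>'_def by (meson diff_le_self le_trans)
      moreover have "bal (ch Z)" using ch_bal[OF bal'] Z unfolding K'_def ch_def by auto
      moreover have "conn (sp (ch Z))" using spch[OF Z] comps_conn[OF Z] by simp
      ultimately show "int (\<Sum>a\<in>Ar. ch Z a) \<le> Phi Z (Ou \<union> X Z)" using IH[of "ch Z"] spch[OF Z] spd[OF Z] by simp
    qed
    have sum_children: "(\<Sum>a\<in>Ar. \<rho>' a) = (\<Sum>Z\<in>comps K'. \<Sum>a\<in>Ar. ch Z a)"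
      using sum_ch[of \<rho>'] unfolding K'_def ch_def by simp
    have gZ: "\<And>Z. Z \<in> comps K' \<Longrightarrow> gsum Z (Ou \<union> X Z) \<le> (M - card (VA C \<inter> VA Z)) + (\<Sum>Y\<in>U Z. F Y)"
    proof -
      fix Z assume Z: "Z \<in> comps K'"
      have "gsum Z (Ou \<union> X Z) \<le> (M - card (VA C \<inter> VA Z)) +
           (\<Sum>Y\<in>{Y\<in>comps Ou. VA Y \<inter> VA (X Z) = {}}. M - card (VA Y \<inter> VA K))"
        by (rule gsum_union[OF cX[OF Z] finX CX finO VKX[OF Z]])
      then show "gsum Z (Ou \<union> X Z) \<le> (M - card (VA C \<inter> VA Z)) + (\<Sum>Y\<in>U Z. F Y)"
        unfolding U_def F_def by simp
    qed
    have sumVA: "(\<Sum>Z\<in>comps K'. card (VA Z)) = card (VA K')"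
    proof -
      have "(\<Sum>Z\<in>comps K'. card (VA K' \<inter> VA Z)) = card (VA K' \<inter> VA K')"
        by (rule sum_card_VA[OF finK' finite_VA[OF finK']])
      moreover have "\<And>Z. Z \<in> comps K' \<Longrightarrow> VA K' \<inter> VA Z = VA Z" using VA_mono[OF comps_sub] by blast
      ultimately show ?thesis by simp
    qed
    define gs where "gs = (\<Sum>Z\<in>comps K'. gsum Z (Ou \<union> X Z))"
    have PhiSum: "(\<Sum>Z\<in>comps K'. Phi Z (Ou \<union> X Z)) =
       int M * cyc K' + 2 * int (card (VA K')) - 2 * (int M * int r) + int gs"
    proof -
      have "(\<Sum>Z\<in>comps K'. Phi Z (Ou \<union> X Z)) = (\<Sum>Z\<in>comps K'. int M * cyc Z) + (\<Sum>Z\<in>comps K'. 2 * int (card (VA Z)))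
         - (\<Sum>Z\<in>comps K'. 2 * int M) + (\<Sum>Z\<in>comps K'. int (gsum Z (Ou \<union> X Z)))"
        unfolding Phi_def by (simp add: sum.distrib sum_subtractf)
      also have "(\<Sum>Z\<in>comps K'. int M * cyc Z) = int M * cyc K'"
        using cyc_comps[OF finK'] by (simp add: sum_distrib_left)
      also have "(\<Sum>Z\<in>comps K'. 2 * int (card (VA Z))) = 2 * int (card (VA K'))"
      proof -
        have "int (card (VA K')) = int (\<Sum>Z\<in>comps K'. card (VA Z))" using sumVA by simp
        also have "\<dots> = (\<Sum>Z\<in>comps K'. int (card (VA Z)))" by (rule of_nat_sum)
        finally have "(\<Sum>Z\<in>comps K'. int (card (VA Z))) = int (card (VA K'))" by simp
        then show ?thesis by (simp add: sum_distrib_left[symmetric])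
      qed
      also have "(\<Sum>Z\<in>comps K'. 2 * int M) = 2 * (int M * int r)" unfolding r_def by simp
      also have "(\<Sum>Z\<in>comps K'. int (gsum Z (Ou \<union> X Z))) = int gs" unfolding gs_def by simp
      finally show ?thesis .
    qed
    have disjU: "\<forall>Z1\<in>comps K'. \<forall>Z2\<in>comps K'. Z1 \<noteq> Z2 \<longrightarrow> U Z1 \<inter> U Z2 = {}"
    proof (intro ballI impI)
      fix Z1 Z2 assume Z: "Z1 \<in> comps K'" "Z2 \<in> comps K'" "Z1 \<noteq> Z2"
      show "U Z1 \<inter> U Z2 = {}"
      proof (rule ccontr)
        assume "U Z1 \<inter> U Z2 \<noteq> {}"
        then obtain Y where Y: "Y \<in> comps Ou" "VA Y \<inter> VA (X Z1) = {}" "VA Y \<inter> VA (X Z2) = {}"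
          unfolding U_def by auto
        have "Z2 \<subseteq> X Z1" "Z1 \<subseteq> X Z2" using comps_sub Z comps_disj[OF Z] unfolding X_def by auto
        then have "VA K \<subseteq> VA (X Z1) \<union> VA (X Z2)"
          using VKX[OF Z(1)] VA_mono by blast
        then have "VA Y \<inter> VA K = {}" using Y by auto
        then show False using touchO[OF Y(1)] by simp
      qed
    qed
    have finUZ: "\<And>Z. finite (U Z)" using finCO unfolding U_def by auto
    have sumU: "(\<Sum>Z\<in>comps K'. \<Sum>Y\<in>U Z. F Y) = (\<Sum>Y\<in>(\<Union>Z\<in>comps K'. U Z). F Y)"
      using sum.UNION_disjoint[OF finCK' _ disjU, of F] finUZ by simp
    define NP where "NP = (\<Sum>Y\<in>comps Ou - (\<Union>Z\<in>comps K'. U Z). F Y)"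
    have GNP: "G = (\<Sum>Y\<in>(\<Union>Z\<in>comps K'. U Z). F Y) + NP"
    proof -
      have "(\<Union>Z\<in>comps K'. U Z) \<subseteq> comps Ou" unfolding U_def by auto
      then show ?thesis unfolding G_F NP_def using sum.subset_diff[OF _ finCO, of "\<Union>Z\<in>comps K'. U Z" F] by simp
    qed
    define y where "y = card (VA C \<inter> VA K')"
    have finVC: "finite (VA C)" using finite_VA[OF finC] .
    have cZl: "\<And>Z. card (VA C \<inter> VA Z) \<le> M"
    proof -
      fix Z have "card (VA C \<inter> VA Z) \<le> card (VA C)" using finVC by (intro card_mono) auto
      then show "card (VA C \<inter> VA Z) \<le> M" using lC lM by simp
    qed
    have sumC: "(\<Sum>Z\<in>comps K'. M - card (VA C \<inter> VA Z)) + y = r * M"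
    proof -
      have "(\<Sum>Z\<in>comps K'. M - card (VA C \<inter> VA Z)) + (\<Sum>Z\<in>comps K'. card (VA C \<inter> VA Z))
          = (\<Sum>Z\<in>comps K'. M)" using cZl by (simp add: sum.distrib[symmetric])
      moreover have "(\<Sum>Z\<in>comps K'. card (VA C \<inter> VA Z)) = y"
        unfolding y_def by (rule sum_card_VA[OF finK' finVC])
      ultimately show ?thesis unfolding r_def by simp
    qed
    have gsb: "gs + y + NP \<le> r * M + G"
    proof -
      have "gs \<le> (\<Sum>Z\<in>comps K'. (M - card (VA C \<inter> VA Z)) + (\<Sum>Y\<in>U Z. F Y))"
        unfolding gs_def by (rule sum_mono) (rule gZ)
      also have "\<dots> = (\<Sum>Z\<in>comps K'. M - card (VA C \<inter> VA Z)) + (\<Sum>Y\<in>(\<Union>Z\<in>comps K'. U Z). F Y)"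
        using sumU by (simp add: sum.distrib)
      finally show ?thesis using sumC GNP by linarith
    qed
    define c0 where "c0 = card (VA K - VA K')"
    have VK'K: "VA K' \<subseteq> VA K" using VA_mono[OF K'K] .
    have nK: "card (VA K) = card (VA K') + c0"
    proof -
      have "VA K = VA K' \<union> (VA K - VA K')" using VK'K by auto
      then have "card (VA K) = card (VA K' \<union> (VA K - VA K'))" by simp
      also have "\<dots> = card (VA K') + c0" unfolding c0_def
        using finVK finite_subset[OF VK'K finVK] by (intro card_Un_disjoint) auto
      finally show ?thesis .
    qed
    have lyc: "l = y + c0"
    proof -
      have "VA C = (VA C \<inter> VA K') \<union> (VA K - VA K')" using VKC by auto
      then have "card (VA C) = card ((VA C \<inter> VA K') \<union> (VA K - VA K'))" by simp
      also have "\<dots> = y + c0" unfolding y_def c0_def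
        using finVK finVC by (intro card_Un_disjoint) auto
      finally show ?thesis using lC by simp
    qed
    have NPy: "k = 2 \<Longrightarrow> r = 1 \<Longrightarrow> y \<le> NP"
    proof -
      assume k2: "k = 2" and r1': "r = 1"
      obtain Z1 where cz: "comps K' = {Z1}" using r1' unfolding r_def by (auto simp: card_1_singleton_iff)
      have Z1: "Z1 \<in> comps K'" using cz by auto
      have K'Z1: "K' = Z1" using Union_comps[of K'] cz by auto
      have nc: "\<not> conn (Ou \<union> Z1)" using om[OF k2] K'Z1 by simp
      obtain Y where Y: "Y \<in> comps Ou" "VA Y \<inter> VA Z1 = {}"
        using conn_union_touch[OF comps_conn[OF Z1], of Ou] nc by auto
      have XZ1: "X Z1 = C" unfolding X_def using K'Z1 by auto
      have "VA Y \<inter> VA C \<noteq> {}" using touchO[OF Y(1)] VKC K'Z1 Y(2) by auto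
      then have YnU: "Y \<notin> (\<Union>Z\<in>comps K'. U Z)" using cz XZ1 unfolding U_def by auto
      have "F Y \<le> NP" unfolding NP_def by (rule member_le_sum) (use Y YnU finCO in auto)
      moreover have "card (VA Y \<inter> VA K) \<le> c0"
      proof -
        have "VA Y \<inter> VA K \<subseteq> VA K - VA K'" using Y(2) K'Z1 by auto
        then show ?thesis unfolding c0_def using finVK by (intro card_mono) auto
      qed
      ultimately show "y \<le> NP" unfolding F_def using lyc lM by linarith
    qed
    have Sgoal: "int (\<Sum>a\<in>Ar. \<rho> a) \<le> int k * int l + (\<Sum>Z\<in>comps K'. Phi Z (Ou \<union> X Z))"
    proof -
      have "int (\<Sum>a\<in>Ar. \<rho> a) = int k * int l + (\<Sum>Z\<in>comps K'. int (\<Sum>a\<in>Ar. ch Z a))"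
        using sumr sum_children by simp
      also have "(\<Sum>Z\<in>comps K'. int (\<Sum>a\<in>Ar. ch Z a)) \<le> (\<Sum>Z\<in>comps K'. Phi Z (Ou \<union> X Z))"
        by (rule sum_mono) (rule IHZ)
      finally show ?thesis by simp
    qed
    have P1: "int M * cyc K' \<le> int M * cyc K - int M"
    proof -
      have "int M * cyc K' \<le> int M * (cyc K - 1)" using cycKK' by (intro mult_left_mono) auto
      then show ?thesis by (simp add: algebra_simps)
    qed
    have P3a: "int M * int r \<ge> int M" using r1 by (simp add: mult_le_cancel_left1)
    have P3b: "r \<ge> 2 \<Longrightarrow> int M * int r \<ge> 2 * int M"
    proof -
      assume "r \<ge> 2" then have "int M * 2 \<le> int M * int r" by (intro mult_left_mono) auto
      then show ?thesis by simp
    qed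
    have P3c: "r = 1 \<Longrightarrow> int M * int r = int M" by simp
    have gsb': "int gs + int y + int NP \<le> int M * int r + int G"
    proof -
      have "int (gs + y + NP) \<le> int (r * M + G)" using gsb by (simp only: of_nat_le_iff)
      then show ?thesis by (simp add: algebra_simps)
    qed
    have ylM: "y \<le> M" using lyc lM by simp
    have "int (\<Sum>a\<in>Ar. \<rho> a) \<le> int M * cyc K + 2 * int (card (VA K)) - 2 * int M + int G"
    proof (cases "k = 2")
      case True
      have kk: "int k * int l = 2 * int y + 2 * int c0" using True lyc by simp
      show ?thesis
      proof (cases "r = 1")
        case True
        then show ?thesis using Sgoal PhiSum gsb' P1 P3c kk nK NPy[OF \<open>k = 2\<close> True] by linarith
      next
        case False
        then have "r \<ge> 2" using r1 by simp
        then show ?thesis using Sgoal PhiSum gsb' P1 P3b kk nK ylM by linarith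
      qed
    next
      case False
      then have kk: "int k * int l = int y + int c0" using k12 lyc by simp
      then show ?thesis using Sgoal PhiSum gsb' P1 P3a nK by linarith
    qed
    then show ?thesis using goal_eq Phi_eq by simp
  qed
qed

lemma main:
  "(\<forall>a\<in>Ar. \<rho> a \<le> \<delta> a) \<Longrightarrow> bal \<rho> \<Longrightarrow> conn (sp \<rho>) \<Longrightarrow>
    int (\<Sum>a\<in>Ar. \<rho> a) \<le> Phi (sp \<rho>) (sp (\<lambda>a. \<delta> a - \<rho> a))"
proof (induction "\<Sum>a\<in>Ar. \<rho> a" arbitrary: \<rho> rule: less_induct)
  case less
  show ?case by (rule main_step[OF _ less(2-4)]) (use less(1) in blast)
qed

end

context gr begin
lemma decomp_not_conn:
  assumes "decomposable Ar tail head f"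
  shows "supp_arrows Ar f \<noteq> {} \<and> \<not> conn (supp_arrows Ar f)"
proof -
  let ?S = "supp_arrows Ar f"
  have d: "?S \<noteq> {}" "\<not> strongly_connected (VA ?S) ?S tail head"
    "\<exists>P. \<Union>P = ?S \<and> (\<forall>X\<in>P. X \<noteq> {} \<and> strongly_connected (VA X) X tail head) \<and>
       (\<forall>X\<in>P. \<forall>Y\<in>P. X \<noteq> Y \<longrightarrow> VA X \<inter> VA Y = {})"
    using assms unfolding decomposable_def Let_def by auto
  obtain P where P0: "\<Union>P = ?S" "\<forall>X\<in>P. X \<noteq> {} \<and> strongly_connected (VA X) X tail head"
    "\<forall>X\<in>P. \<forall>Y\<in>P. X \<noteq> Y \<longrightarrow> VA X \<inter> VA Y = {}" using d(3) by (elim exE conjE) simp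
  have P: "\<Union>P = ?S" "\<And>X. X \<in> P \<Longrightarrow> X \<noteq> {} \<and> strongly_connected (VA X) X tail head"
    "\<And>X Y. X \<in> P \<Longrightarrow> Y \<in> P \<Longrightarrow> X \<noteq> Y \<Longrightarrow> VA X \<inter> VA Y = {}" using P0 by auto
  have "\<not> conn ?S"
  proof
    assume c: "conn ?S"
    obtain X where X: "X \<in> P" using P(1) d(1) by auto
    have "closedin ?S X" unfolding closedin_def
    proof (intro ballI)
      fix b assume b: "b \<in> ?S - X"
      then obtain Y where Y: "Y \<in> P" "b \<in> Y" using P(1) by auto
      then have "Y \<noteq> X" using b by auto
      then have "VA Y \<inter> VA X = {}" using P(3) X Y by auto
      then show "ends b \<inter> VA X = {}" using ends_sub[OF Y(2)] by auto
    qed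
    then have "X = ?S" using conn_closed_eq[OF c, of X] P X by auto
    then show False using P(2)[OF X] d(2) by auto
  qed
  then show ?thesis using d(1) by auto
qed

lemma count_pos: "a \<in> set xs \<Longrightarrow> count_list xs a \<ge> 1"
  by (induction xs) auto
end

theorem theorem3p9:
  fixes V :: "'v set" and Ar :: "'a set" and tail head :: "'a \<Rightarrow> 'v"
    and n d m :: nat and \<delta> :: "'a \<Rightarrow> nat"
  assumes "QClass n d m V Ar tail head"
    and "\<delta> \<in> Omega2 Ar tail head"
  shows "int (\<Sum>a\<in>Ar. \<delta> a) \<le> int m * (int d - int n - 1) + 2 * int n"
proof -
  interpret gr tail head .
  have q: "finite V" "finite Ar" "tail ` Ar \<subseteq> V" "head ` Ar \<subseteq> V"
    and sc: "strongly_connected V Ar tail head" and cV: "card V = n" and cA: "card Ar = d"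
    and mm: "mQ Ar tail head = m"
    using assms(1) unfolding QClass_def quiver_def by auto
  interpret qv tail head Ar by unfold_locales (rule q(2))
  obtain h where h: "\<delta> = mdeg h" "closed_path Ar tail head h" "set h = Ar"
    using assms(2) unfolding Omega2_def Omega0_def by auto
  have dd: "\<And>p. delta_double Ar tail head \<delta> p \<Longrightarrow> decomposable Ar tail head (\<lambda>b. \<delta> b - 2 * mdeg p b)"
    using assms(2) unfolding Omega2_def by auto
  have dh: "\<delta> = count_list h" using h(1) unfolding mdeg_def by auto
  have dpos: "\<And>a. a \<in> Ar \<Longrightarrow> \<delta> a \<ge> 1" using dh h(3) count_pos by auto
  have hne: "h \<noteq> []" using h(2) unfolding closed_path_def is_path_def by auto
  have Aconn: "conn Ar"
  proof -
    have "conn (set h)"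
      using h(2) unfolding closed_path_def is_path_def by (intro path_conn[OF hne]) auto
    then show ?thesis using h(3) by simp
  qed
  have VAV: "VA Ar = V"
  proof
    show "VA Ar \<subseteq> V" using q unfolding arrow_verts_def by auto
    obtain h0 where h0: "closed_path Ar tail head h0" "V \<subseteq> path_verts tail head h0"
      using sc unfolding strongly_connected_def by auto
    have "h0 \<noteq> []" "set h0 \<subseteq> Ar" using h0(1) unfolding closed_path_def is_path_def by auto
    then have "h0 ! 0 \<in> Ar" by (meson nth_mem length_greater_0_conv subsetD)
    then have "tail (h0 ! 0) \<in> VA Ar" unfolding arrow_verts_def by auto
    moreover have "head ` set h0 \<subseteq> VA Ar" using \<open>set h0 \<subseteq> Ar\<close> unfolding arrow_verts_def by auto
    ultimately have "path_verts tail head h0 \<subseteq> VA Ar" unfolding path_verts_def by auto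
    then show "V \<subseteq> VA Ar" using h0(2) by auto
  qed
  have balh: "bal \<delta>" using bal_closed[OF h(2)] dh by simp
  let ?Lset = "{length p |p. primitive_closed Ar tail head p}"
  have lenV: "\<And>p. primitive_closed Ar tail head p \<Longrightarrow> length p \<le> card (VA Ar)"
  proof -
    fix p assume p: "primitive_closed Ar tail head p"
    have "VA (set p) \<subseteq> VA Ar" using VA_mono prim_facts(2)[OF p] by auto
    then have "card (VA (set p)) \<le> card (VA Ar)" using finite_VA[OF q(2)] by (intro card_mono) auto
    then show "length p \<le> card (VA Ar)" using prim_facts(7)[OF p] by simp
  qed
  have finL: "finite ?Lset" by (rule finite_subset[of _ "{..card (VA Ar)}"]) (use lenV in auto)
  obtain a0 where a0: "a0 \<in> Ar" using hne h(3) by (cases h) auto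
  obtain p0 where p0: "primitive_closed Ar tail head p0" using exists_prim[OF balh a0 dpos[OF a0]] by auto
  have Lne: "?Lset \<noteq> {}" using p0 by auto
  have cycM: "\<And>p. primitive_closed Ar tail head p \<Longrightarrow> length p \<le> m"
    using mm finL unfolding mQ_def by (auto intro: Max_ge)
  have "Max ?Lset \<le> card (VA Ar)" using finL Lne lenV by (subst Max_le_iff) auto
  then have MV: "m \<le> card (VA Ar)" using mm unfolding mQ_def by simp
  have om2: "\<And>p. primitive_closed Ar tail head p \<Longrightarrow> (\<forall>a\<in>set p. \<delta> a \<ge> 2) \<Longrightarrow>
      supp_arrows Ar (\<lambda>b. \<delta> b - 2 * count_list p b) \<noteq> {} \<and>
      \<not> conn (supp_arrows Ar (\<lambda>b. \<delta> b - 2 * count_list p b))"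
  proof -
    fix p assume p: "primitive_closed Ar tail head p" "\<forall>a\<in>set p. \<delta> a \<ge> 2"
    have "delta_double Ar tail head \<delta> p" unfolding delta_double_def using p by auto
    then have "decomposable Ar tail head (\<lambda>b. \<delta> b - 2 * mdeg p b)" using dd by auto
    then show "supp_arrows Ar (\<lambda>b. \<delta> b - 2 * count_list p b) \<noteq> {} \<and>
      \<not> conn (supp_arrows Ar (\<lambda>b. \<delta> b - 2 * count_list p b))"
      using decomp_not_conn unfolding mdeg_def by auto
  qed
  interpret mc tail head Ar \<delta> m
    by unfold_locales (use dpos Aconn om2 cycM MV in auto)
  have spd: "sp \<delta> = Ar" using dpos unfolding supp_arrows_def by auto
  have sp0: "sp (\<lambda>a. \<delta> a - \<delta> a) = {}" unfolding supp_arrows_def by auto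
  have "int (\<Sum>a\<in>Ar. \<delta> a) \<le> Phi (sp \<delta>) (sp (\<lambda>a. \<delta> a - \<delta> a))"
    by (rule main) (use balh Aconn spd in auto)
  also have "\<dots> = int m * cyc Ar + 2 * int (card (VA Ar)) - 2 * int m"
    unfolding spd sp0 Phi_def gsum_def by simp
  also have "cyc Ar = int d - int n + 1" using cyc_conn[OF Aconn] cA VAV cV by simp
  finally show ?thesis using VAV cV by (simp add: algebra_simps)
qed

end
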